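(* Let $X_t=I_n(f_t)$, $t\in[0,1]$, be a continuous process in the $n$-th homogeneous Wiener chaos of an isonormal Gaussian process over a real separable Hilbert space $\mathcal{H}$, and assume Assumptions 1, 3 and 4 of the context hold (with constants $C,\theta$ and $\beta$). Let $\rho<\theta/2$ and let $g:[0,1]\to\mathbb{R}$ be a deterministic $\tau$-Hölder continuous function with $\tau+\rho>1$ and Hölder norm $\|g\|_\tau\neq0$. Then at least one of the following holds: \[\mathbb{E}\Big(\int_0^1 g_t\,dX_t\Big)^2\geq\frac{\beta}{4}\Big(\sup_{r\in[0,1]}|g_r|\Big)^2\,\mathbb{E}(X_1)^2,\] or \[\mathbb{E}\Big(\int_0^1 g_t\,dX_t\Big)^2\geq\frac{\beta}{4}\Big(\sup_{r\in[0,1]}|g_r|\Big)^2\,\mathbb{E}(X_{a,b})^2\] for some interval $[a,b]\subset[0,1]$ with \[\Big(\frac{\sup_{r\in[0,1]}|g_r|}{2\|g\|_\tau}\Big)^{1/\tau}\leq|b-a|.\]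
   Context: $I_n$ is the $n$-th multiple Wiener–Itô integral with $\mathbb{E}[I_n(f)I_n(g)]=n!\langle f,g\rangle_{\mathcal{H}^{\otimes n}}$, $f_t\in\mathcal{H}^{\hat\otimes n}$; $f_{s,t}=f_t-f_s$, $X_{s,t}=X_t-X_s$. $\int_0^1 g_t\,dX_t$ is a Young integral. $\|g\|_\tau=\sup_{s\ne t}|g_t-g_s|/|t-s|^\tau$. Assumption 1: $f_0=0$ and there are $C>0$, $\theta>1$ with $0<\|f_t-f_s\|_{\mathcal{H}^{\otimes n}}\leq C|t-s|^{\theta/2}$ for all $0\le s<t\le1$ (so paths of $X$ are a.s. $\rho$-Hölder for every $\rho<\theta/2$). Assumption 3: there is $\beta\in(0,1)$ such that for any $m\in\mathbb{N}^+$, $k,l\in\mathbb{N}$, any nonzero $(a_1,\dots,a_m)$, any $t_1<\cdots<t_m$ in $[0,1]$, any $s_1,\dots,s_k\in[0,t_1)$ and $r_1,\dots,r_l\in(t_m,1]$: $\|\Phi-P\Phi\|^2>\beta\|\Phi\|^2$ (norms in $\mathcal{H}^{\otimes n}$), where $\Phi=a_1f_{t_1,t_2}+\cdots+a_mf_{t_{m-1},t_m}$ and $P$ is the orthogonal projection onto $\overline{\mathrm{Span}}\{f_{0,s_1},\dots,f_{s_k,t_1},f_{t_m,r_1},\dots,f_{r_{l-1},r_l}\}$. Assumption 4: for any $[u,v]\subset[s,t]\subset[0,1]$, $\langle f_v-f_u,f_t-f_s\rangle_{\mathcal{H}^{\otimes n}}\geq0$. *)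

theory Defs
  imports "HOL-Analysis.Analysis" "HOL-Probability.Probability"
begin

definition orth_proj :: "'h::real_inner set \<Rightarrow> 'h \<Rightarrow> 'h" where
  "orth_proj S x = (THE p. p \<in> S \<and> (\<forall>y\<in>S. inner (x - p) y = 0))"

fun incr_list :: "(real \<Rightarrow> 'h::real_vector) \<Rightarrow> real list \<Rightarrow> 'h list" where
  "incr_list f (a # b # ps) = (f b - f a) # incr_list f (b # ps)"
| "incr_list f _ = []"

definition assumption1 :: "(real \<Rightarrow> 'h::real_inner) \<Rightarrow> real \<Rightarrow> real \<Rightarrow> bool" where
  "assumption1 f C \<theta> \<longleftrightarrow> f 0 = 0 \<and> C > 0 \<and> \<theta> > 1 \<and>
     (\<forall>s t. 0 \<le> s \<and> s < t \<and> t \<le> 1 \<longrightarrow>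
        0 < norm (f t - f s) \<and> norm (f t - f s) \<le> C * (t - s) powr (\<theta> / 2))"

text \<open>Points t_1 < ... < t_m (m >= 2) are the
  list ts; coefficients a_1,...,a_(m-1) of the m-1 consecutive increments form the list as;
  the s_i and r_j are arbitrary lists of points in [0,t_1) and (t_m,1].\<close>
definition assumption3 :: "(real \<Rightarrow> 'h::real_inner) \<Rightarrow> real \<Rightarrow> bool" where
  "assumption3 f \<beta> \<longleftrightarrow> 0 < \<beta> \<and> \<beta> < 1 \<and>
     (\<forall>ts as ss rs.
        2 \<le> length ts \<and> sorted_wrt (<) ts \<and> set ts \<subseteq> {0..1} \<and>
        length as = length ts - 1 \<and> (\<exists>a\<in>set as. a \<noteq> 0) \<and>
        set ss \<subseteq> {0..<hd ts} \<and> set rs \<subseteq> {last ts<..1} \<longrightarrow>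
        (let \<Phi> = (\<Sum>i<length as. as ! i *\<^sub>R (f (ts ! Suc i) - f (ts ! i)));
             V = closure (span (set (incr_list f (0 # ss @ [hd ts]) @ incr_list f (last ts # rs))))
         in norm (\<Phi> - orth_proj V \<Phi>)^2 > \<beta> * (norm \<Phi>)^2))"

definition assumption4 :: "(real \<Rightarrow> 'h::real_inner) \<Rightarrow> bool" where
  "assumption4 f \<longleftrightarrow> (\<forall>u v s t. 0 \<le> s \<and> s \<le> u \<and> u \<le> v \<and> v \<le> t \<and> t \<le> 1 \<longrightarrow>
      inner (f v - f u) (f t - f s) \<ge> 0)"

definition holder_on :: "real \<Rightarrow> (real \<Rightarrow> real) \<Rightarrow> bool" where
  "holder_on \<tau> g \<longleftrightarrow> (\<exists>K. \<forall>s\<in>{0..1}. \<forall>t\<in>{0..1}. \<bar>g t - g s\<bar> \<le> K * \<bar>t - s\<bar> powr \<tau>)"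

definition holder_norm :: "real \<Rightarrow> (real \<Rightarrow> real) \<Rightarrow> real" where
  "holder_norm \<tau> g = (SUP st \<in> {(s,t). s \<in> {0..1} \<and> t \<in> {0..1} \<and> s \<noteq> t}.
       \<bar>g (snd st) - g (fst st)\<bar> / \<bar>snd st - fst st\<bar> powr \<tau>)"

definition tagged_partition01 :: "nat \<Rightarrow> (nat \<Rightarrow> real) \<Rightarrow> (nat \<Rightarrow> real) \<Rightarrow> bool" where
  "tagged_partition01 N p \<xi> \<longleftrightarrow> N > 0 \<and> p 0 = 0 \<and> p N = 1 \<and>
     (\<forall>i<N. p i < p (Suc i) \<and> p i \<le> \<xi> i \<and> \<xi> i \<le> p (Suc i))"

definition mesh :: "nat \<Rightarrow> (nat \<Rightarrow> real) \<Rightarrow> real" where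
  "mesh N p = Max ((\<lambda>i. p (Suc i) - p i) ` {..<N})"

definition young_has_integral :: "(real \<Rightarrow> real) \<Rightarrow> (real \<Rightarrow> real) \<Rightarrow> real \<Rightarrow> bool" where
  "young_has_integral g x L \<longleftrightarrow> (\<forall>\<epsilon>>0. \<exists>\<delta>>0. \<forall>N p \<xi>.
      tagged_partition01 N p \<xi> \<and> mesh N p < \<delta> \<longrightarrow>
      \<bar>(\<Sum>i<N. g (\<xi> i) * (x (p (Suc i)) - x (p i))) - L\<bar> < \<epsilon>)"

definition young_integral :: "(real \<Rightarrow> real) \<Rightarrow> (real \<Rightarrow> real) \<Rightarrow> real" where
  "young_integral g x = (THE L. young_has_integral g x L)"

end

theory Submission
  imports Defs
begin

fun rsum :: "(real \<Rightarrow> real) \<Rightarrow> (real \<Rightarrow> 'a::real_normed_vector) \<Rightarrow> real list \<Rightarrow> 'a" where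
  "rsum g x (a # b # q) = g a *\<^sub>R (x b - x a) + rsum g x (b # q)"
| "rsum g x _ = 0"

fun finel :: "real \<Rightarrow> real list \<Rightarrow> bool" where
  "finel d (a # b # q) = (b - a \<le> d \<and> finel d (b # q))"
| "finel d _ = True"

fun spw :: "real \<Rightarrow> real list \<Rightarrow> real" where
  "spw \<gamma> (a # b # q) = (b - a) powr \<gamma> + spw \<gamma> (b # q)"
| "spw \<gamma> _ = 0"

lemma rsum_nth: "rsum g x q = (\<Sum>i<length q - 1. g (q!i) *\<^sub>R (x (q!Suc i) - x (q!i)))"
proof (induction g x q rule: rsum.induct)
  case (1 g x a b q)
  then show ?case by (simp add: sum.lessThan_Suc_shift del: sum.lessThan_Suc)
qed auto

lemma spw_nth: "spw \<gamma> q = (\<Sum>i<length q - 1. (q!Suc i - q!i) powr \<gamma>)"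
proof (induction \<gamma> q rule: spw.induct)
  case (1 g a b q)
  then show ?case by (simp add: sum.lessThan_Suc_shift del: sum.lessThan_Suc)
qed auto

lemma finel_nth: "finel d q \<longleftrightarrow> (\<forall>i. Suc i < length q \<longrightarrow> q!Suc i - q!i \<le> d)"
proof (induction d q rule: finel.induct)
  case (1 d a b q)
  show ?case
  proof
    assume "finel d (a # b # q)"
    then show "\<forall>i. Suc i < length (a # b # q) \<longrightarrow> (a # b # q) ! Suc i - (a # b # q) ! i \<le> d"
      using 1 by (auto simp: less_Suc_eq_0_disj nth_Cons split: nat.splits)
  next
    assume H: "\<forall>i. Suc i < length (a # b # q) \<longrightarrow> (a # b # q) ! Suc i - (a # b # q) ! i \<le> d"
    have "b - a \<le> d" using H[rule_format, of 0] by simp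
    moreover have "\<forall>i. Suc i < length (b # q) \<longrightarrow> (b # q) ! Suc i - (b # q) ! i \<le> d"
      using H by (metis Suc_less_eq length_Cons nth_Cons_Suc)
    ultimately show "finel d (a # b # q)" using 1 by simp
  qed
qed auto

lemma rsum_Cons: "rsum g x (p # l) = (case l of [] \<Rightarrow> 0 | y # _ \<Rightarrow> g p *\<^sub>R (x y - x p)) + rsum g x l"
  by (cases l) auto

lemma rsum_append: "rsum g x (xs @ [y]) + rsum g x (y # ys) = rsum g x (xs @ y # ys)"
proof (induction xs)
  case Nil then show ?case by simp
next
  case (Cons p xs)
  then show ?case by (cases xs) (auto simp: rsum_Cons algebra_simps)
qed

lemma rsum_remove: "rsum g x (ps @ [a,b,c] @ qs) = rsum g x (ps @ [a,c] @ qs) + (g b - g a) *\<^sub>R (x c - x b)"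
proof (induction ps)
  case Nil then show ?case by (simp add: algebra_simps)
next
  case (Cons p ps)
  then show ?case by (cases ps) (auto simp: rsum_Cons algebra_simps)
qed

lemma split3: "i + 2 < length q \<Longrightarrow> q = take i q @ [q!i, q!(i+1), q!(i+2)] @ drop (i+3) q"
proof -
  assume a: "i + 2 < length q"
  have "drop i q = q!i # q!(i+1) # q!(i+2) # drop (i+3) q"
    using a by (simp add: Cons_nth_drop_Suc numeral_3_eq_3)
  then show ?thesis by (metis append_Cons append_Nil append_take_drop_id)
qed

lemma good_index:
  fixes q :: "real list"
  assumes "sorted q" "length q = m + 1" "2 \<le> m"
  shows "\<exists>i. i + 2 \<le> m \<and> (q!(i+2) - q!i) * (real m - 1) \<le> 2 * (q!m - q!0)"
proof (rule ccontr)
  assume nt: "\<not> ?thesis"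
  have H: "\<And>i. i < m - 1 \<Longrightarrow> 2 * (q!m - q!0) / (real m - 1) < q!(Suc (Suc i)) - q!i"
  proof -
    fix i assume i: "i < m - 1"
    then have "\<not> (q!(i+2) - q!i) * (real m - 1) \<le> 2 * (q!m - q!0)"
      using nt by auto
    moreover have "real m - 1 > 0" using assms(3) by simp
    ultimately show "2 * (q!m - q!0) / (real m - 1) < q!(Suc (Suc i)) - q!i"
      by (simp add: divide_less_eq not_le numeral_2_eq_2)
  qed
  have mono: "\<And>i j. i \<le> j \<Longrightarrow> j \<le> m \<Longrightarrow> q!i \<le> q!j"
    using assms by (simp add: sorted_nth_mono)
  have "(\<Sum>i<m-1. 2 * (q!m - q!0) / (real m - 1)) < (\<Sum>i<m-1. q!(Suc (Suc i)) - q!i)"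
    by (rule sum_strict_mono) (use H assms(3) in \<open>auto simp: lessThan_empty_iff\<close>)
  also have "\<dots> = (\<Sum>i<m-1. q!(Suc (Suc i)) - q!(Suc i)) + (\<Sum>i<m-1. q!(Suc i) - q!i)"
    by (simp add: sum.distrib[symmetric])
  also have "\<dots> = (q!(Suc (m-1)) - q!1) + (q!(m-1) - q!0)"
    using sum_lessThan_telescope[of "\<lambda>i. q!(Suc i)" "m-1"] sum_lessThan_telescope[of "\<lambda>i. q!i" "m-1"]
    by simp
  also have "\<dots> \<le> 2 * (q!m - q!0)"
    using mono[of 0 1] mono[of "m-1" m] assms(3) by (simp add: Suc_diff_1)
  finally show False using assms(3) by simp
qed

definition yH :: "(real \<Rightarrow> real) \<Rightarrow> (real \<Rightarrow> 'a::real_normed_vector) \<Rightarrow> real \<Rightarrow> real \<Rightarrow> bool" where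
  "yH g x K \<gamma> \<longleftrightarrow> (\<forall>s u v t. 0 \<le> s \<and> s \<le> u \<and> u \<le> t \<and> s \<le> v \<and> v \<le> t \<and> t \<le> 1 \<longrightarrow>
      norm ((g u - g s) *\<^sub>R (x t - x v)) \<le> K * (t - s) powr \<gamma>)"

lemma maxineq:
  assumes yH: "yH g x K \<gamma>" and K: "0 \<le> K" and \<gamma>: "0 < \<gamma>"
  shows "sorted q \<Longrightarrow> length q = m + 1 \<Longrightarrow> set q \<subseteq> {0..1} \<Longrightarrow>
    norm (rsum g x q - g (hd q) *\<^sub>R (x (last q) - x (hd q)))
      \<le> K * (last q - hd q) powr \<gamma> * (\<Sum>j\<in>{1..<m}. (2 / real j) powr \<gamma>)"
proof (induction m arbitrary: q)
  case 0
  then obtain a where "q = [a]" by (cases q) auto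
  then show ?case by simp
next
  case (Suc m)
  have S: "sorted q" and L: "length q = Suc m + 1" and Q: "set q \<subseteq> {0..1}" using Suc.prems by auto
  have hdq: "hd q = q!0" using L by (cases q) auto
  have lastq: "last q = q!(Suc m)" using L by (subst last_conv_nth) auto
  have mono: "\<And>i j. i \<le> j \<Longrightarrow> j \<le> Suc m \<Longrightarrow> q!i \<le> q!j"
    using S L by (simp add: sorted_nth_mono)
  have inq: "\<And>i. i \<le> Suc m \<Longrightarrow> 0 \<le> q!i \<and> q!i \<le> 1"
    using Q L by (metis atLeastAtMost_iff le_imp_less_Suc nth_mem subsetD Suc_eq_plus1)
  have TS: "0 \<le> last q - hd q" using mono[of 0 "Suc m"] hdq lastq by simp
  have sumnn: "0 \<le> (\<Sum>j\<in>{1..<Suc m}. (2 / real j) powr \<gamma>)" by (rule sum_nonneg) simp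
  show ?case
  proof (cases "m = 0")
    case True
    then obtain a b where "q = [a, b]" using L
      by (metis One_nat_def Suc_eq_plus1 length_0_conv length_Suc_conv)
    then show ?thesis using K TS sumnn by simp
  next
    case False
    obtain i where i: "i + 2 \<le> Suc m" and ic: "(q!(i+2) - q!i) * (real (Suc m) - 1) \<le> 2 * (q!(Suc m) - q!0)"
      using good_index[OF S L] False by auto
    define ps where "ps = take i q"
    define qs where "qs = drop (i+3) q"
    define a where "a = q!i"
    define b where "b = q!(i+1)"
    define c where "c = q!(i+2)"
    have qeq: "q = ps @ [a,b,c] @ qs" unfolding ps_def qs_def a_def b_def c_def
      by (rule split3) (use i L in simp)
    define q' where "q' = ps @ [a,c] @ qs"
    have L': "length q' = m + 1" using L qeq unfolding q'_def by simp
    have S': "sorted q'" using S qeq unfolding q'_def by (auto simp: sorted_append)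
    have Q': "set q' \<subseteq> {0..1}" using Q qeq unfolding q'_def by auto
    have hd': "hd q' = hd q" using qeq unfolding q'_def by (cases ps) auto
    have last': "last q' = last q" using qeq unfolding q'_def by (cases qs) auto
    have IH: "norm (rsum g x q' - g (hd q) *\<^sub>R (x (last q) - x (hd q)))
      \<le> K * (last q - hd q) powr \<gamma> * (\<Sum>j\<in>{1..<m}. (2 / real j) powr \<gamma>)"
      using Suc.IH[OF S' L' Q'] hd' last' by simp
    have rem: "rsum g x q = rsum g x q' + (g b - g a) *\<^sub>R (x c - x b)"
      using qeq rsum_remove unfolding q'_def by metis
    have abc: "0 \<le> a" "a \<le> b" "b \<le> c" "c \<le> 1"
      using mono[of i "i+1"] mono[of "i+1" "i+2"] inq[of i] inq[of "i+2"] i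
      unfolding a_def b_def c_def by auto
    have cost: "norm ((g b - g a) *\<^sub>R (x c - x b)) \<le> K * (c - a) powr \<gamma>"
      using yH abc unfolding yH_def by auto
    have m0: "real m > 0" using False by simp
    have ca: "c - a \<le> (last q - hd q) * (2 / real m)"
      using ic m0 hdq lastq unfolding a_def c_def by (simp add: field_simps)
    have "(c - a) powr \<gamma> \<le> ((last q - hd q) * (2 / real m)) powr \<gamma>"
      by (rule powr_mono2) (use \<gamma> abc ca in auto)
    also have "\<dots> = (last q - hd q) powr \<gamma> * (2 / real m) powr \<gamma>"
      using TS m0 by (intro powr_mult)
    finally have cost2: "norm ((g b - g a) *\<^sub>R (x c - x b)) \<le> K * ((last q - hd q) powr \<gamma> * (2 / real m) powr \<gamma>)"
      using cost K by (meson mult_left_mono order_trans)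
    have "norm (rsum g x q - g (hd q) *\<^sub>R (x (last q) - x (hd q)))
       \<le> norm (rsum g x q' - g (hd q) *\<^sub>R (x (last q) - x (hd q))) + norm ((g b - g a) *\<^sub>R (x c - x b))"
      unfolding rem by (rule order_trans[OF _ norm_triangle_ineq]) (simp add: algebra_simps)
    also have "\<dots> \<le> K * (last q - hd q) powr \<gamma> * (\<Sum>j\<in>{1..<m}. (2 / real j) powr \<gamma>)
        + K * ((last q - hd q) powr \<gamma> * (2 / real m) powr \<gamma>)"
      using IH cost2 by linarith
    also have "\<dots> = K * (last q - hd q) powr \<gamma> * (\<Sum>j\<in>{1..<Suc m}. (2 / real j) powr \<gamma>)"
      using False by (simp add: sum.atLeastLessThan_Suc algebra_simps)
    finally show ?thesis .
  qed
qed

definition Zs :: "real \<Rightarrow> real" where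
  "Zs \<gamma> = suminf (\<lambda>n. (2 / real n) powr \<gamma>)"

lemma Zs_summable: "1 < \<gamma> \<Longrightarrow> summable (\<lambda>n. (2 / real n) powr \<gamma>)"
proof -
  assume g: "1 < \<gamma>"
  have eq: "(\<lambda>n. (2 / real n) powr \<gamma>) = (\<lambda>n. 2 powr \<gamma> * real n powr (- \<gamma>))"
  proof
    fix n show "(2 / real n) powr \<gamma> = 2 powr \<gamma> * real n powr (- \<gamma>)"
    proof (cases "n = 0")
      case False
      then have "(2 / real n) powr \<gamma> = 2 powr \<gamma> / real n powr \<gamma>" by (simp add: powr_divide)
      also have "\<dots> = 2 powr \<gamma> * real n powr (- \<gamma>)" by (simp add: powr_minus_divide)
      finally show ?thesis .
    qed simp
  qed
  have "summable (\<lambda>n. real n powr (- \<gamma>))" using g by (simp add: summable_real_powr_iff)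
  then show ?thesis unfolding eq by (rule summable_mult)
qed

lemma sum_le_Zs: "1 < \<gamma> \<Longrightarrow> (\<Sum>j\<in>{1..<m}. (2 / real j) powr \<gamma>) \<le> Zs \<gamma>"
proof -
  assume g: "1 < \<gamma>"
  have "(\<Sum>j\<in>{1..<m}. (2 / real j) powr \<gamma>) \<le> (\<Sum>j\<in>{..<m}. (2 / real j) powr \<gamma>)"
    by (rule sum_mono2) auto
  also have "\<dots> \<le> Zs \<gamma>" unfolding Zs_def
    by (rule sum_le_suminf[OF Zs_summable[OF g]]) auto
  finally show ?thesis .
qed

lemma Zs_nonneg: "1 < \<gamma> \<Longrightarrow> 0 \<le> Zs \<gamma>"
  using sum_le_Zs[of \<gamma> 0] by simp

lemma maxineq':
  assumes yH: "yH g x K \<gamma>" and K: "0 \<le> K" and \<gamma>: "1 < \<gamma>"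
    and q: "sorted q" "q \<noteq> []" "set q \<subseteq> {0..1}"
  shows "norm (rsum g x q - g (hd q) *\<^sub>R (x (last q) - x (hd q))) \<le> K * Zs \<gamma> * (last q - hd q) powr \<gamma>"
proof -
  have "norm (rsum g x q - g (hd q) *\<^sub>R (x (last q) - x (hd q)))
      \<le> K * (last q - hd q) powr \<gamma> * (\<Sum>j\<in>{1..<length q - 1}. (2 / real j) powr \<gamma>)"
    using maxineq[OF yH K, of q "length q - 1"] q \<gamma> by simp
  also have "\<dots> \<le> K * (last q - hd q) powr \<gamma> * Zs \<gamma>"
    by (rule mult_left_mono[OF sum_le_Zs]) (use \<gamma> K in auto)
  finally show ?thesis by (simp add: algebra_simps)
qed

lemma sorted_hd_le: "sorted R \<Longrightarrow> y \<in> set R \<Longrightarrow> hd R \<le> y"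
  by (cases R) auto

lemma sorted_le_last: "sorted R \<Longrightarrow> y \<in> set R \<Longrightarrow> y \<le> last R"
proof -
  assume s: "sorted R" and y: "y \<in> set R"
  then obtain i where i: "i < length R" "R!i = y" by (auto simp: in_set_conv_nth)
  then have "last R = R!(length R - 1)" by (subst last_conv_nth) auto
  then show ?thesis using s i by (auto intro: sorted_nth_mono)
qed

lemma refine:
  assumes yH: "yH g x K \<gamma>" and K: "0 \<le> K" and \<gamma>: "1 < \<gamma>"
  shows "sorted P \<Longrightarrow> P \<noteq> [] \<Longrightarrow> sorted R \<Longrightarrow> set P \<subseteq> set R \<Longrightarrow> hd R = hd P \<Longrightarrow> last R = last P
    \<Longrightarrow> set R \<subseteq> {0..1} \<Longrightarrow> norm (rsum g x R - rsum g x P) \<le> K * Zs \<gamma> * spw \<gamma> P"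
proof (induction P arbitrary: R)
  case Nil then show ?case by simp
next
  case (Cons a P')
  show ?case
  proof (cases P')
    case Nil
    have "R \<noteq> []" using Cons.prems by auto
    have hl: "hd R = a" "last R = a" using Cons.prems Nil by auto
    have "norm (rsum g x R - g (hd R) *\<^sub>R (x (last R) - x (hd R))) \<le> K * Zs \<gamma> * (last R - hd R) powr \<gamma>"
      by (rule maxineq'[OF yH K \<gamma>]) (use Cons.prems \<open>R \<noteq> []\<close> in auto)
    then have "rsum g x R = 0" using hl \<gamma> by simp
    then show ?thesis using Nil by simp
  next
    fix b P'' assume Cons2: "P' = b # P''"
    have sP: "sorted (a # b # P'')" using Cons.prems Cons2 by simp
    have ab: "a \<le> b" using sP by simp
    define tw where "tw = takeWhile (\<lambda>y. y < b) R"
    define R2 where "R2 = dropWhile (\<lambda>y. y < b) R"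
    have Req: "R = tw @ R2" unfolding tw_def R2_def by simp
    have twlt: "\<forall>y\<in>set tw. y < b" unfolding tw_def by (meson set_takeWhileD)
    have bR: "b \<in> set R" using Cons.prems Cons2 by auto
    have bR2: "b \<in> set R2" using bR twlt Req by auto
    then have R2ne: "R2 \<noteq> []" by auto
    have sR2: "sorted R2" unfolding R2_def using Cons.prems by (simp add: sorted_dropWhile)
    have "\<not> hd R2 < b" unfolding R2_def by (rule hd_dropWhile) (use R2ne R2_def in simp)
    moreover have "hd R2 \<le> b" using sorted_hd_le[OF sR2 bR2] .
    ultimately have hdR2: "hd R2 = b" by simp
    have R2eq: "R2 = b # tl R2" using R2ne hdR2 by (cases R2) auto
    define R1 where "R1 = tw @ [b]"
    have rs: "rsum g x R = rsum g x R1 + rsum g x R2"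
      unfolding R1_def using rsum_append[of g x tw b "tl R2"] Req R2eq by metis
    have sR: "sorted R" using Cons.prems by simp
    have sR1: "sorted R1" unfolding R1_def using sR Req bR2 by (auto simp: sorted_append)
    have hdR: "hd R = a" using Cons.prems by simp
    have hdR1: "hd R1 = a"
    proof (cases tw)
      case Nil
      then have "hd R = b" using Req hdR2 by simp
      then show ?thesis using hdR R1_def Nil by simp
    next
      case (Cons c tw')
      then show ?thesis using hdR Req R1_def by simp
    qed
    have setR1: "set R1 \<subseteq> {0..1}" unfolding R1_def using Cons.prems Req bR by auto
    have m1: "norm (rsum g x R1 - g a *\<^sub>R (x b - x a)) \<le> K * Zs \<gamma> * (b - a) powr \<gamma>"
      using maxineq'[OF yH K \<gamma> sR1 _ setR1] hdR1 unfolding R1_def by simp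
    have sub2: "set (b # P'') \<subseteq> set R2"
    proof
      fix y assume y: "y \<in> set (b # P'')"
      then have "b \<le> y" using sP by auto
      moreover have "y \<in> set R" using y Cons.prems Cons2 by auto
      ultimately show "y \<in> set R2" using Req twlt by fastforce
    qed
    have last2: "last R2 = last (b # P'')" using Cons.prems Cons2 Req R2ne by simp
    have setR2: "set R2 \<subseteq> {0..1}" using Cons.prems Req by auto
    have m2: "norm (rsum g x R2 - rsum g x (b # P'')) \<le> K * Zs \<gamma> * spw \<gamma> (b # P'')"
    proof -
      have "norm (rsum g x R2 - rsum g x P') \<le> K * Zs \<gamma> * spw \<gamma> P'"
        by (rule Cons.IH) (use sR2 sub2 last2 setR2 sP hdR2 Cons2 in auto)
      then show ?thesis using Cons2 by simp
    qed
    have e1: "rsum g x (a # P') = g a *\<^sub>R (x b - x a) + rsum g x (b # P'')" using Cons2 by simp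
    have "rsum g x R - rsum g x (a # P')
        = (rsum g x R1 - g a *\<^sub>R (x b - x a)) + (rsum g x R2 - rsum g x (b # P''))"
      unfolding rs e1 by simp
    then have "norm (rsum g x R - rsum g x (a # P'))
        = norm ((rsum g x R1 - g a *\<^sub>R (x b - x a)) + (rsum g x R2 - rsum g x (b # P'')))"
      by simp
    also have "\<dots> \<le> norm (rsum g x R1 - g a *\<^sub>R (x b - x a)) + norm (rsum g x R2 - rsum g x (b # P''))"
      by (rule norm_triangle_ineq)
    also have "\<dots> \<le> K * Zs \<gamma> * (b - a) powr \<gamma> + K * Zs \<gamma> * spw \<gamma> (b # P'')"
      using m1 m2 by (rule add_mono)
    also have "\<dots> = K * Zs \<gamma> * spw \<gamma> (a # P')" using Cons2 by (simp add: algebra_simps)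
    finally show ?thesis .
  qed
qed

lemma finel_mono: "finel d q \<Longrightarrow> d \<le> d' \<Longrightarrow> finel d' q"
  by (auto simp: finel_nth)

lemma spw_bound:
  assumes d: "0 \<le> d"
  shows "1 \<le> \<gamma> \<Longrightarrow> sorted P \<Longrightarrow> finel d P \<Longrightarrow> P \<noteq> [] \<Longrightarrow> spw \<gamma> P \<le> d powr (\<gamma> - 1) * (last P - hd P)"
proof (induction \<gamma> P rule: spw.induct)
  case (1 \<gamma>' a b q)
  have ab: "0 \<le> b - a" "b - a \<le> d" using 1 by auto
  have "(b - a) powr \<gamma>' \<le> d powr (\<gamma>' - 1) * (b - a)"
  proof (cases "b - a = 0")
    case True then show ?thesis using 1 by simp
  next
    case False
    then have "(b - a) powr \<gamma>' = (b - a) powr (\<gamma>' - 1) * (b - a)"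
      using ab by (simp add: powr_diff)
    also have "\<dots> \<le> d powr (\<gamma>' - 1) * (b - a)"
      by (rule mult_right_mono[OF powr_mono2]) (use 1 ab in auto)
    finally show ?thesis .
  qed
  moreover have "spw \<gamma>' (b # q) \<le> d powr (\<gamma>' - 1) * (last (b # q) - b)" using 1 by simp
  ultimately show ?case by (simp add: algebra_simps)
qed auto

definition part01 :: "real list \<Rightarrow> bool" where
  "part01 q \<longleftrightarrow> sorted q \<and> q \<noteq> [] \<and> hd q = 0 \<and> last q = 1 \<and> set q \<subseteq> {0..1}"

lemma part01_refine:
  assumes yH: "yH g x K \<gamma>" and K: "0 \<le> K" and \<gamma>: "1 < \<gamma>" and d: "0 \<le> d"
    and P: "part01 P" "finel d P" and R: "part01 R" "set P \<subseteq> set R"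
  shows "norm (rsum g x R - rsum g x P) \<le> K * Zs \<gamma> * d powr (\<gamma> - 1)"
proof -
  have "norm (rsum g x R - rsum g x P) \<le> K * Zs \<gamma> * spw \<gamma> P"
    by (rule refine[OF yH K \<gamma>]) (use P R in \<open>auto simp: part01_def\<close>)
  also have "\<dots> \<le> K * Zs \<gamma> * (d powr (\<gamma> - 1) * (last P - hd P))"
    by (rule mult_left_mono[OF spw_bound]) (use P \<gamma> d K Zs_nonneg[OF \<gamma>] in \<open>auto simp: part01_def\<close>)
  finally show ?thesis using P by (simp add: part01_def)
qed

lemma cauchy_bound:
  assumes yH: "yH g x K \<gamma>" and K: "0 \<le> K" and \<gamma>: "1 < \<gamma>" and d: "0 \<le> d"
    and P: "part01 P" "finel d P" and Q: "part01 Q" "finel d Q"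
  shows "norm (rsum g x P - rsum g x Q) \<le> 2 * K * Zs \<gamma> * d powr (\<gamma> - 1)"
proof -
  define R where "R = sort (P @ Q)"
  have sR: "sorted R" and setR: "set R = set P \<union> set Q" unfolding R_def by auto
  have Pne: "P \<noteq> []" using P by (simp add: part01_def)
  then have Rne: "R \<noteq> []" using setR by auto
  have setR01: "set R \<subseteq> {0..1}" using setR P Q by (auto simp: part01_def)
  have "0 \<in> set R" using setR P Pne hd_in_set[OF Pne] by (auto simp: part01_def)
  then have "hd R \<le> 0" using sorted_hd_le[OF sR] by blast
  moreover have "hd R \<ge> 0" using hd_in_set[OF Rne] setR01 by auto
  ultimately have hdR: "hd R = 0" by simp
  have "1 \<in> set R" using setR P Pne last_in_set[OF Pne] by (auto simp: part01_def)
  then have "1 \<le> last R" using sorted_le_last[OF sR] by blast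
  moreover have "last R \<le> 1" using last_in_set[OF Rne] setR01 by auto
  ultimately have lastR: "last R = 1" by simp
  have pR: "part01 R" using sR Rne hdR lastR setR01 by (simp add: part01_def)
  have 1: "norm (rsum g x R - rsum g x P) \<le> K * Zs \<gamma> * d powr (\<gamma> - 1)"
    by (rule part01_refine[OF yH K \<gamma> d P pR]) (simp add: setR)
  have 2: "norm (rsum g x R - rsum g x Q) \<le> K * Zs \<gamma> * d powr (\<gamma> - 1)"
    by (rule part01_refine[OF yH K \<gamma> d Q pR]) (simp add: setR)
  have "norm (rsum g x P - rsum g x Q) \<le> norm (rsum g x R - rsum g x P) + norm (rsum g x R - rsum g x Q)"
  proof -
    have "rsum g x P - rsum g x Q = (rsum g x R - rsum g x Q) - (rsum g x R - rsum g x P)" by simp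
    then have "norm (rsum g x P - rsum g x Q) = norm ((rsum g x R - rsum g x Q) - (rsum g x R - rsum g x P))"
      by simp
    also have "\<dots> \<le> norm (rsum g x R - rsum g x Q) + norm (rsum g x R - rsum g x P)"
      by (rule norm_triangle_ineq4)
    finally show ?thesis by simp
  qed
  then show ?thesis using 1 2 by simp
qed

definition U :: "nat \<Rightarrow> real list" where
  "U n = map (\<lambda>j. real j / real (Suc n)) [0..<n+2]"

lemma U_part01: "part01 (U n)"
proof -
  have "sorted (U n)" unfolding U_def sorted_map
    by (rule sorted_wrt_mono_rel[OF _ sorted_upt]) (simp add: divide_right_mono)
  moreover have "set (U n) \<subseteq> {0..1}" unfolding U_def by (auto simp del: upt_Suc simp: field_simps)
  moreover have "hd (U n) = 0" unfolding U_def by (simp del: upt_Suc add: upt_rec)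
  moreover have "last (U n) = 1" unfolding U_def by (simp del: upt_Suc add: last_map)
  ultimately show ?thesis unfolding part01_def U_def by simp
qed

lemma U_fine: "finel (1 / real (Suc n)) (U n)"
  unfolding finel_nth U_def by (auto simp del: upt_Suc simp: nth_map diff_divide_distrib[symmetric])

lemma U_fine': "1 / real (Suc n) \<le> d \<Longrightarrow> finel d (U n)"
  using finel_mono[OF U_fine] .

lemma U_fine_ge: "inverse (real (Suc M)) < d \<Longrightarrow> M \<le> m \<Longrightarrow> finel d (U m)"
proof (rule U_fine')
  assume "inverse (real (Suc M)) < d" "M \<le> m"
  moreover have "inverse (real (Suc m)) \<le> inverse (real (Suc M))"
    by (rule le_imp_inverse_le) (use \<open>M \<le> m\<close> in auto)
  moreover have "1 / real (Suc m) = inverse (real (Suc m))" by (simp add: inverse_eq_divide)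
  ultimately show "1 / real (Suc m) \<le> d" by linarith
qed

lemma small_pow:
  fixes C \<gamma> e :: real
  assumes C: "0 < C" and \<gamma>: "1 < \<gamma>" and e: "0 < e"
  shows "\<exists>d>0. C * d powr (\<gamma> - 1) < e"
proof -
  define d where "d = (e / (2 * C)) powr (1 / (\<gamma> - 1))"
  have d0: "d > 0" unfolding d_def using C e by simp
  have "d powr (\<gamma> - 1) = e / (2 * C)" unfolding d_def powr_powr using \<gamma> C e by simp
  then have "C * d powr (\<gamma> - 1) = e / 2" using C by simp
  then show ?thesis using d0 e by (intro exI[of _ d]) simp
qed

lemma young_exists:
  fixes x :: "real \<Rightarrow> 'a::{real_normed_vector, complete_space}"
  assumes yH: "yH g x K \<gamma>" and K: "0 \<le> K" and \<gamma>: "1 < \<gamma>"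
  shows "\<exists>L. \<forall>\<epsilon>>0. \<exists>\<delta>>0. \<forall>q. part01 q \<and> finel \<delta> q \<longrightarrow> norm (rsum g x q - L) < \<epsilon>"
proof -
  define C where "C = 2 * K * Zs \<gamma> + 1"
  have "0 \<le> K * Zs \<gamma>" using K Zs_nonneg[OF \<gamma>] by simp
  then have C0: "0 < C" unfolding C_def by simp
  have cb: "norm (rsum g x P - rsum g x Q) \<le> C * d powr (\<gamma> - 1)"
    if "0 \<le> d" "part01 P" "finel d P" "part01 Q" "finel d Q" for P Q d
  proof -
    have "norm (rsum g x P - rsum g x Q) \<le> 2 * K * Zs \<gamma> * d powr (\<gamma> - 1)"
      by (rule cauchy_bound[OF yH K \<gamma>]) (use that in auto)
    also have "\<dots> \<le> C * d powr (\<gamma> - 1)" unfolding C_def by (simp add: algebra_simps)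
    finally show ?thesis .
  qed
  define s where "s n = rsum g x (U n)" for n
  have "Cauchy s"
  proof (rule metric_CauchyI)
    fix e :: real assume e: "0 < e"
    obtain d where d: "d > 0" "C * d powr (\<gamma> - 1) < e" using small_pow[OF C0 \<gamma> e] by auto
    obtain M where M: "inverse (real (Suc M)) < d" using reals_Archimedean[OF d(1)] by auto
    have "dist (s m) (s n) < e" if "m \<ge> M" "n \<ge> M" for m n
    proof -
      have fm: "finel d (U m)" "finel d (U n)"
        using U_fine_ge[OF M] that by auto
      have "dist (s m) (s n) \<le> C * d powr (\<gamma> - 1)" unfolding s_def dist_norm
        by (rule cb) (use d fm U_part01 in auto)
      then show ?thesis using d by simp
    qed
    then show "\<exists>M. \<forall>m\<ge>M. \<forall>n\<ge>M. dist (s m) (s n) < e" by blast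
  qed
  then obtain L where L: "s \<longlonglongrightarrow> L" using Cauchy_convergent_iff convergent_def by blast
  have "\<forall>\<epsilon>>0. \<exists>\<delta>>0. \<forall>q. part01 q \<and> finel \<delta> q \<longrightarrow> norm (rsum g x q - L) < \<epsilon>"
  proof (intro allI impI)
    fix \<epsilon> :: real assume e: "0 < \<epsilon>"
    then have e2: "0 < \<epsilon> / 2" by simp
    obtain d where d: "d > 0" "C * d powr (\<gamma> - 1) < \<epsilon> / 2" using small_pow[OF C0 \<gamma> e2] by auto
    obtain N1 where N1: "\<And>n. n \<ge> N1 \<Longrightarrow> norm (s n - L) < \<epsilon> / 2"
      using LIMSEQ_D[OF L e2] by auto
    obtain N2 where N2: "inverse (real (Suc N2)) < d" using reals_Archimedean[OF d(1)] by auto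
    define n where "n = max N1 N2"
    have fn: "finel d (U n)" using U_fine_ge[OF N2] unfolding n_def by simp
    have sn: "norm (s n - L) < \<epsilon> / 2" using N1 unfolding n_def by simp
    show "\<exists>\<delta>>0. \<forall>q. part01 q \<and> finel \<delta> q \<longrightarrow> norm (rsum g x q - L) < \<epsilon>"
    proof (intro exI[of _ d] conjI allI impI)
      fix q assume q: "part01 q \<and> finel d q"
      have "norm (rsum g x q - s n) \<le> C * d powr (\<gamma> - 1)" unfolding s_def
        by (rule cb) (use d q fn U_part01 in auto)
      moreover have "norm (rsum g x q - L) \<le> norm (rsum g x q - s n) + norm (s n - L)"
        by (rule norm_diff_triangle_le[of _ "s n"]) simp_all
      ultimately show "norm (rsum g x q - L) < \<epsilon>" using sn d by linarith
    qed (use d in auto)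
  qed
  then show ?thesis by blast
qed

lemma holder_yH:
  fixes x :: "real \<Rightarrow> 'a::real_normed_vector"
  assumes g: "\<And>s t. s \<in> {0..1} \<Longrightarrow> t \<in> {0..1} \<Longrightarrow> \<bar>g t - g s\<bar> \<le> Kg * \<bar>t - s\<bar> powr \<tau>"
    and x: "\<And>s t. s \<in> {0..1} \<Longrightarrow> t \<in> {0..1} \<Longrightarrow> norm (x t - x s) \<le> Kx * \<bar>t - s\<bar> powr \<rho>"
    and \<tau>: "0 \<le> \<tau>" and \<rho>: "0 \<le> \<rho>" and Kg: "0 \<le> Kg" and Kx: "0 \<le> Kx"
  shows "yH g x (Kg * Kx) (\<tau> + \<rho>)"
  unfolding yH_def
proof (intro allI impI)
  fix s u v t :: real
  assume H: "0 \<le> s \<and> s \<le> u \<and> u \<le> t \<and> s \<le> v \<and> v \<le> t \<and> t \<le> 1"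
  have "\<bar>g u - g s\<bar> \<le> Kg * \<bar>u - s\<bar> powr \<tau>" using g[of s u] H by auto
  also have "\<dots> \<le> Kg * (t - s) powr \<tau>"
    by (rule mult_left_mono[OF powr_mono2]) (use H \<tau> Kg in auto)
  finally have 1: "\<bar>g u - g s\<bar> \<le> Kg * (t - s) powr \<tau>" .
  have "norm (x t - x v) \<le> Kx * \<bar>t - v\<bar> powr \<rho>" using x[of v t] H by auto
  also have "\<dots> \<le> Kx * (t - s) powr \<rho>"
    by (rule mult_left_mono[OF powr_mono2]) (use H \<rho> Kx in auto)
  finally have 2: "norm (x t - x v) \<le> Kx * (t - s) powr \<rho>" .
  have "norm ((g u - g s) *\<^sub>R (x t - x v)) = \<bar>g u - g s\<bar> * norm (x t - x v)" by simp
  also have "\<dots> \<le> (Kg * (t - s) powr \<tau>) * (Kx * (t - s) powr \<rho>)"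
    by (rule mult_mono[OF 1 2]) (use Kg in auto)
  also have "\<dots> = Kg * Kx * (t - s) powr (\<tau> + \<rho>)"
  proof (cases "t - s = 0")
    case True then show ?thesis using H by simp
  next
    case False then show ?thesis by (simp add: powr_add)
  qed
  finally show "norm ((g u - g s) *\<^sub>R (x t - x v)) \<le> Kg * Kx * (t - s) powr (\<tau> + \<rho>)" .
qed

lemma holder_on_K:
  assumes "holder_on \<tau> g"
  obtains K where "0 \<le> K" "\<And>s t. s \<in> {0..1} \<Longrightarrow> t \<in> {0..1} \<Longrightarrow> \<bar>g t - g s\<bar> \<le> K * \<bar>t - s\<bar> powr \<tau>"
proof -
  obtain K where K: "\<forall>s\<in>{0..1}. \<forall>t\<in>{0..1}. \<bar>g t - g s\<bar> \<le> K * \<bar>t - s\<bar> powr \<tau>"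
    using assms unfolding holder_on_def by auto
  have "\<bar>g t - g s\<bar> \<le> max K 0 * \<bar>t - s\<bar> powr \<tau>" if "s \<in> {0..1}" "t \<in> {0..1}" for s t
  proof -
    have "K * \<bar>t - s\<bar> powr \<tau> \<le> max K 0 * \<bar>t - s\<bar> powr \<tau>" by (rule mult_right_mono) auto
    then show ?thesis using K that by fastforce
  qed
  then show ?thesis using that[of "max K 0"] by auto
qed

lemma part_mono:
  assumes "tagged_partition01 N p \<xi>"
  shows "i \<le> j \<Longrightarrow> j \<le> N \<Longrightarrow> p i \<le> p j"
proof (induction j rule: nat.induct)
  case zero then show ?case by simp
next
  case (Suc j)
  show ?case
  proof (cases "i = Suc j")
    case False
    then have "p i \<le> p j" using Suc by simp
    moreover have "p j < p (Suc j)" using assms Suc.prems unfolding tagged_partition01_def by auto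
    ultimately show ?thesis by simp
  qed simp
qed

lemma part_list:
  assumes P: "tagged_partition01 N p \<xi>"
  shows "part01 (map p [0..<Suc N])" "finel (mesh N p) (map p [0..<Suc N])"
proof -
  have N: "N > 0" "p 0 = 0" "p N = 1" using P unfolding tagged_partition01_def by auto
  have "sorted (map p [0..<Suc N])" unfolding sorted_iff_nth_mono
    using part_mono[OF P] by (auto simp del: upt_Suc)
  moreover have "set (map p [0..<Suc N]) \<subseteq> {0..1}"
    using part_mono[OF P, of 0] part_mono[OF P, of _ N] N by (auto simp del: upt_Suc)
  moreover have "hd (map p [0..<Suc N]) = 0" using N by (simp del: upt_Suc add: upt_rec)
  moreover have "last (map p [0..<Suc N]) = 1" using N by (simp del: upt_Suc add: last_map)
  ultimately show "part01 (map p [0..<Suc N])" unfolding part01_def by simp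
  show "finel (mesh N p) (map p [0..<Suc N])" unfolding finel_nth mesh_def
    by (auto simp del: upt_Suc simp: nth_map intro!: Max_ge)
qed

lemma mesh_pos:
  assumes P: "tagged_partition01 N p \<xi>" shows "0 < mesh N p"
proof -
  have N: "N > 0" "p 0 < p 1" using P unfolding tagged_partition01_def by auto
  have "p 1 - p 0 \<le> mesh N p" unfolding mesh_def by (rule Max_ge) (use N in auto)
  then show ?thesis using N by simp
qed

lemma rsum_map: "rsum g x (map p [0..<Suc N]) = (\<Sum>i<N. g (p i) *\<^sub>R (x (p (Suc i)) - x (p i)))"
  unfolding rsum_nth by (auto simp del: upt_Suc simp: nth_map intro!: sum.cong)

lemma spw_map: "spw \<gamma> (map p [0..<Suc N]) = (\<Sum>i<N. (p (Suc i) - p i) powr \<gamma>)"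
  unfolding spw_nth by (auto simp del: upt_Suc simp: nth_map intro!: sum.cong)

lemma tag_bound:
  assumes yH: "yH g x K \<gamma>" and K: "0 \<le> K" and \<gamma>: "1 < \<gamma>" and P: "tagged_partition01 N p \<xi>"
  shows "norm ((\<Sum>i<N. g (\<xi> i) *\<^sub>R (x (p (Suc i)) - x (p i))) - rsum g x (map p [0..<Suc N]))
    \<le> K * mesh N p powr (\<gamma> - 1)"
proof -
  have pl: "part01 (map p [0..<Suc N])" "finel (mesh N p) (map p [0..<Suc N])"
    using part_list[OF P] by auto
  have "norm ((\<Sum>i<N. g (\<xi> i) *\<^sub>R (x (p (Suc i)) - x (p i))) - rsum g x (map p [0..<Suc N]))
     = norm (\<Sum>i<N. (g (\<xi> i) - g (p i)) *\<^sub>R (x (p (Suc i)) - x (p i)))"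
    unfolding rsum_map by (simp add: sum_subtractf[symmetric] scaleR_diff_left)
  also have "\<dots> \<le> (\<Sum>i<N. norm ((g (\<xi> i) - g (p i)) *\<^sub>R (x (p (Suc i)) - x (p i))))"
    by (rule norm_sum)
  also have "\<dots> \<le> (\<Sum>i<N. K * (p (Suc i) - p i) powr \<gamma>)"
  proof (rule sum_mono)
    fix i assume i: "i \<in> {..<N}"
    have "0 \<le> p i" "p (Suc i) \<le> 1"
      using part_mono[OF P, of 0 i] part_mono[OF P, of "Suc i" N] i P
      unfolding tagged_partition01_def by auto
    moreover have "p i \<le> \<xi> i" "\<xi> i \<le> p (Suc i)" using P i unfolding tagged_partition01_def by auto
    ultimately show "norm ((g (\<xi> i) - g (p i)) *\<^sub>R (x (p (Suc i)) - x (p i))) \<le> K * (p (Suc i) - p i) powr \<gamma>"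
      using yH unfolding yH_def by auto
  qed
  also have "\<dots> = K * spw \<gamma> (map p [0..<Suc N])" by (simp del: upt_Suc add: spw_map sum_distrib_left)
  also have "\<dots> \<le> K * (mesh N p powr (\<gamma> - 1) * (last (map p [0..<Suc N]) - hd (map p [0..<Suc N])))"
    by (rule mult_left_mono[OF spw_bound]) (use pl \<gamma> K mesh_pos[OF P] in \<open>auto simp: part01_def\<close>)
  also have "\<dots> = K * mesh N p powr (\<gamma> - 1)" using pl unfolding part01_def by (simp del: upt_Suc)
  finally show ?thesis .
qed

lemma young_has:
  fixes x :: "real \<Rightarrow> real"
  assumes yH: "yH g x K \<gamma>" and K: "0 \<le> K" and \<gamma>: "1 < \<gamma>"
  shows "\<exists>L. young_has_integral g x L \<and> (\<forall>\<epsilon>>0. \<exists>\<delta>>0. \<forall>q. part01 q \<and> finel \<delta> q \<longrightarrow> \<bar>rsum g x q - L\<bar> < \<epsilon>)"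
proof -
  obtain L where L: "\<forall>\<epsilon>>0. \<exists>\<delta>>0. \<forall>q. part01 q \<and> finel \<delta> q \<longrightarrow> norm (rsum g x q - L) < \<epsilon>"
    using young_exists[OF yH K \<gamma>] by blast
  have "young_has_integral g x L" unfolding young_has_integral_def
  proof (intro allI impI)
    fix \<epsilon> :: real assume e: "0 < \<epsilon>"
    then have e2: "0 < \<epsilon> / 2" by simp
    obtain \<delta>1 where d1: "\<delta>1 > 0" "\<forall>q. part01 q \<and> finel \<delta>1 q \<longrightarrow> norm (rsum g x q - L) < \<epsilon> / 2"
      using L e2 by blast
    obtain d where d: "d > 0" "(K + 1) * d powr (\<gamma> - 1) < \<epsilon> / 2"
      using small_pow[of "K + 1" \<gamma> "\<epsilon> / 2"] K \<gamma> e2 by auto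
    show "\<exists>\<delta>>0. \<forall>N p \<xi>. tagged_partition01 N p \<xi> \<and> mesh N p < \<delta> \<longrightarrow>
        \<bar>(\<Sum>i<N. g (\<xi> i) * (x (p (Suc i)) - x (p i))) - L\<bar> < \<epsilon>"
    proof (intro exI[of _ "min \<delta>1 d"] conjI allI impI)
      fix N p \<xi> assume H: "tagged_partition01 N p \<xi> \<and> mesh N p < min \<delta>1 d"
      then have P: "tagged_partition01 N p \<xi>" and m: "mesh N p < \<delta>1" "mesh N p < d" by auto
      have pl: "part01 (map p [0..<Suc N])" "finel (mesh N p) (map p [0..<Suc N])"
        using part_list[OF P] by auto
      have 1: "\<bar>rsum g x (map p [0..<Suc N]) - L\<bar> < \<epsilon> / 2"
        using d1(2) pl finel_mono[OF pl(2)] m by fastforce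
      have 2: "\<bar>(\<Sum>i<N. g (\<xi> i) * (x (p (Suc i)) - x (p i))) - rsum g x (map p [0..<Suc N])\<bar>
          \<le> K * mesh N p powr (\<gamma> - 1)"
        using tag_bound[OF yH K \<gamma> P] by simp
      have "K * mesh N p powr (\<gamma> - 1) \<le> (K + 1) * d powr (\<gamma> - 1)"
        by (rule mult_mono[OF _ powr_mono2]) (use K \<gamma> m mesh_pos[OF P] in auto)
      then show "\<bar>(\<Sum>i<N. g (\<xi> i) * (x (p (Suc i)) - x (p i))) - L\<bar> < \<epsilon>"
        using 1 2 d by linarith
    qed (use d1 d in auto)
  qed
  then show ?thesis using L by auto
qed

lemma mesh_less:
  assumes "0 < N" "\<And>i. i < N \<Longrightarrow> p (Suc i) - p i < \<delta>"
  shows "mesh N p < \<delta>"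
  unfolding mesh_def using assms by (subst Max_less_iff) auto

lemma abs_contra: "\<bar>(s::real) - a\<bar> < \<bar>a - b\<bar> / 2 \<Longrightarrow> \<bar>s - b\<bar> < \<bar>a - b\<bar> / 2 \<Longrightarrow> False"
  by (simp add: abs_if split: if_splits)

lemma young_unique:
  assumes "young_has_integral g x L1" "young_has_integral g x L2"
  shows "L1 = L2"
proof (rule ccontr)
  assume ne: "L1 \<noteq> L2"
  define e where "e = \<bar>L1 - L2\<bar> / 2"
  have e: "e > 0" using ne unfolding e_def by simp
  obtain d1 where d1: "d1 > 0" "\<forall>N p \<xi>. tagged_partition01 N p \<xi> \<and> mesh N p < d1 \<longrightarrow>
      \<bar>(\<Sum>i<N. g (\<xi> i) * (x (p (Suc i)) - x (p i))) - L1\<bar> < e"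
    using assms(1) e unfolding young_has_integral_def by blast
  obtain d2 where d2: "d2 > 0" "\<forall>N p \<xi>. tagged_partition01 N p \<xi> \<and> mesh N p < d2 \<longrightarrow>
      \<bar>(\<Sum>i<N. g (\<xi> i) * (x (p (Suc i)) - x (p i))) - L2\<bar> < e"
    using assms(2) e unfolding young_has_integral_def by blast
  obtain n where n: "inverse (real (Suc n)) < min d1 d2" using reals_Archimedean[of "min d1 d2"] d1 d2 by auto
  define p where "p i = real i / real (Suc n)" for i
  have P: "tagged_partition01 (Suc n) p p" unfolding tagged_partition01_def p_def
    by (auto simp: divide_right_mono divide_strict_right_mono)
  have "mesh (Suc n) p < min d1 d2"
    by (rule mesh_less) (use n in \<open>auto simp: p_def diff_divide_distrib[symmetric] inverse_eq_divide\<close>)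
  then have A: "tagged_partition01 (Suc n) p p \<and> mesh (Suc n) p < d1"
    "tagged_partition01 (Suc n) p p \<and> mesh (Suc n) p < d2" using P by auto
  have "\<bar>(\<Sum>i<Suc n. g (p i) * (x (p (Suc i)) - x (p i))) - L1\<bar> < e"
    using d1(2) A(1) by blast
  moreover have "\<bar>(\<Sum>i<Suc n. g (p i) * (x (p (Suc i)) - x (p i))) - L2\<bar> < e"
    using d2(2) A(2) by blast
  ultimately show False unfolding e_def using abs_contra by blast
qed

lemma young_integral_eq: "young_has_integral g x L \<Longrightarrow> young_integral g x = L"
  unfolding young_integral_def using young_unique by blast

lemma proj_exists:
  fixes S :: "'h::real_inner set"
  assumes "finite S"
  shows "\<forall>x. \<exists>p\<in>span S. \<forall>y\<in>span S. inner (x - p) y = 0"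
  using assms
proof (induction S rule: finite_induct)
  case empty
  show ?case by (auto intro!: bexI[of _ 0] simp: span_empty)
next
  case (insert u S)
  show ?case
  proof
    fix x
    obtain P where P: "\<And>z. P z \<in> span S" "\<And>z y. y \<in> span S \<Longrightarrow> inner (z - P z) y = 0"
      using insert.IH by metis
    define w where "w = u - P u"
    have wS: "\<And>y. y \<in> span S \<Longrightarrow> inner w y = 0" unfolding w_def using P by auto
    show "\<exists>p\<in>span (insert u S). \<forall>y\<in>span (insert u S). inner (x - p) y = 0"
    proof (cases "w = 0")
      case True
      then have "u \<in> span S" using P(1)[of u] unfolding w_def by simp
      then have sp: "span (insert u S) = span S" by (rule span_redundant)
      show ?thesis unfolding sp using P by blast
    next
      case False
      define c where "c = inner x w / inner w w"
      define p where "p = P x + c *\<^sub>R w"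
      have PI: "P z \<in> span (insert u S)" for z using P(1)[of z] span_mono[of S "insert u S"] by auto
      have uI: "u \<in> span (insert u S)" by (rule span_base) simp
      have winS: "w \<in> span (insert u S)" unfolding w_def by (rule span_diff[OF uI PI])
      have pin: "p \<in> span (insert u S)" unfolding p_def by (rule span_add[OF PI span_scale[OF winS]])
      have zS: "inner (x - p) z = 0" if z: "z \<in> span S" for z
      proof -
        have "inner (x - p) z = inner (x - P x) z - c * inner w z" unfolding p_def
          by (simp add: inner_diff_left algebra_simps)
        then show ?thesis using P(2)[OF z] wS[OF z] by simp
      qed
      have ww: "inner w w \<noteq> 0" using False by simp
      have "inner (x - p) w = inner x w - inner (P x) w - c * inner w w" unfolding p_def
        by (simp add: inner_diff_left inner_add_left)
      also have "inner (P x) w = 0" using wS[OF P(1)[of x]] by (simp add: inner_commute)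
      finally have xw: "inner (x - p) w = 0" unfolding c_def using ww by simp
      have xu: "inner (x - p) u = 0"
      proof -
        have "u = w + P u" unfolding w_def by simp
        then have "inner (x - p) u = inner (x - p) w + inner (x - p) (P u)"
          by (metis inner_add_right)
        then show ?thesis using xw zS[OF P(1)[of u]] by simp
      qed
      have "\<forall>y\<in>span (insert u S). inner (x - p) y = 0"
      proof
        fix y assume "y \<in> span (insert u S)"
        then obtain k where k: "y - k *\<^sub>R u \<in> span S" unfolding span_insert by auto
        have "y = k *\<^sub>R u + (y - k *\<^sub>R u)" by simp
        then have "inner (x - p) y = k * inner (x - p) u + inner (x - p) (y - k *\<^sub>R u)"
          by (metis inner_add_right inner_scaleR_right)
        then show "inner (x - p) y = 0" using xu zS[OF k] by simp
      qed
      then show ?thesis using pin by blast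
    qed
  qed
qed

lemma orth_proj_props:
  fixes S :: "'h::real_inner set"
  assumes "finite S"
  defines "V \<equiv> closure (span S)"
  shows "orth_proj V x \<in> V \<and> (\<forall>y\<in>V. inner (x - orth_proj V x) y = 0)"
proof -
  obtain p where p: "p \<in> span S" "\<forall>y\<in>span S. inner (x - p) y = 0"
    using proj_exists[OF assms(1)] by blast
  have pV: "p \<in> V" unfolding V_def using p(1) closure_subset by blast
  have "closure (span S) \<subseteq> {y. inner (x - p) y = 0}"
    by (rule closure_minimal) (use p(2) in \<open>auto intro!: closed_Collect_eq continuous_intros\<close>)
  then have pperp: "\<forall>y\<in>V. inner (x - p) y = 0" unfolding V_def by auto
  have "orth_proj V x = p" unfolding orth_proj_def
  proof (rule the_equality)
    show "p \<in> V \<and> (\<forall>y\<in>V. inner (x - p) y = 0)" using pV pperp by auto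
  next
    fix p' assume p': "p' \<in> V \<and> (\<forall>y\<in>V. inner (x - p') y = 0)"
    have "inner (p' - p) (p' - p) = inner (x - p) (p' - p) - inner (x - p') (p' - p)"
      by (simp add: inner_diff_left inner_diff_right algebra_simps)
    also have "\<dots> = 0" using pperp p' pV by (simp add: inner_diff_right)
    finally show "p' = p" by simp
  qed
  then show ?thesis using pV pperp by simp
qed

lemma pyth: "inner a b = 0 \<Longrightarrow> inner (a + b) (a + b) = inner a a + inner b b"
  by (simp add: inner_add_left inner_add_right inner_commute[of b a])

lemma orth_proj_min:
  fixes S :: "'h::real_inner set"
  assumes "finite S" and v: "v \<in> closure (span S)"
  shows "norm (x - orth_proj (closure (span S)) x) \<le> norm (x + v)"
proof -
  define V where "V = closure (span S)"
  define p where "p = orth_proj V x"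
  have pp: "p \<in> V" "\<forall>y\<in>V. inner (x - p) y = 0" using orth_proj_props[OF assms(1), of x]
    unfolding p_def V_def by auto
  have "inner (x - p) (p + v) = 0" using pp v unfolding V_def by (simp add: inner_add_right)
  then have "inner ((x - p) + (p + v)) ((x - p) + (p + v)) = inner (x - p) (x - p) + inner (p + v) (p + v)"
    by (rule pyth)
  then have "inner (x + v) (x + v) = inner (x - p) (x - p) + inner (p + v) (p + v)" by simp
  then have "inner (x - p) (x - p) \<le> inner (x + v) (x + v)" by simp
  then show ?thesis unfolding p_def V_def norm_le .
qed

definition lin :: "real \<Rightarrow> real \<Rightarrow> nat \<Rightarrow> nat \<Rightarrow> real" where
  "lin \<alpha> w k j = \<alpha> + w * real j / real k"

lemma lin_mono: "0 \<le> w \<Longrightarrow> i \<le> j \<Longrightarrow> lin \<alpha> w k i \<le> lin \<alpha> w k j"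
  unfolding lin_def by (simp add: divide_right_mono mult_left_mono)

lemma lin_strict: "0 < w \<Longrightarrow> 0 < k \<Longrightarrow> i < j \<Longrightarrow> lin \<alpha> w k i < lin \<alpha> w k j"
  unfolding lin_def by (simp add: divide_strict_right_mono)

lemma lin_0[simp]: "lin \<alpha> w k 0 = \<alpha>" unfolding lin_def by simp

lemma lin_k: "0 < k \<Longrightarrow> lin \<alpha> w k k = \<alpha> + w" unfolding lin_def by simp

lemma lin_range: "0 \<le> w \<Longrightarrow> j \<le> k \<Longrightarrow> 0 < k \<Longrightarrow> \<alpha> \<le> lin \<alpha> w k j \<and> lin \<alpha> w k j \<le> \<alpha> + w"
proof -
  assume w: "0 \<le> w" and j: "j \<le> k" and k: "0 < k"
  have "w * real j / real k \<le> w" using w j k by (simp add: mult_left_le divide_le_eq mult_left_mono)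
  moreover have "0 \<le> w * real j / real k" using w by simp
  ultimately show ?thesis unfolding lin_def by simp
qed

lemma lin_sorted: "0 \<le> w \<Longrightarrow> sorted (map (lin \<alpha> w k) [m..<n])"
  unfolding sorted_map by (rule sorted_wrt_mono_rel[OF _ sorted_upt]) (simp add: lin_mono)

lemma lin_sorted_strict: "0 < w \<Longrightarrow> 0 < k \<Longrightarrow> sorted_wrt (<) (map (lin \<alpha> w k) [m..<n])"
  unfolding sorted_wrt_map by (rule sorted_wrt_mono_rel[OF _ sorted_wrt_upt]) (simp add: lin_strict)

lemma lin_finel: "0 \<le> w \<Longrightarrow> w \<le> 1 \<Longrightarrow> 0 < k \<Longrightarrow> finel (1 / real k) (map (lin \<alpha> w k) [m..<n])"
  unfolding finel_nth
proof (intro allI impI)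
  fix i assume w: "0 \<le> w" "w \<le> 1" and k: "0 < k" and i: "Suc i < length (map (lin \<alpha> w k) [m..<n])"
  have "map (lin \<alpha> w k) [m..<n] ! Suc i - map (lin \<alpha> w k) [m..<n] ! i = lin \<alpha> w k (m + Suc i) - lin \<alpha> w k (m + i)"
    using i by simp
  also have "\<dots> = w / real k" unfolding lin_def
    by (simp add: diff_divide_distrib[symmetric] algebra_simps)
  also have "\<dots> \<le> 1 / real k" using w k by (simp add: divide_right_mono)
  finally show "map (lin \<alpha> w k) [m..<n] ! Suc i - map (lin \<alpha> w k) [m..<n] ! i \<le> 1 / real k" .
qed

lemma finel_append:
  "finel d xs \<Longrightarrow> finel d ys \<Longrightarrow> (xs \<noteq> [] \<Longrightarrow> ys \<noteq> [] \<Longrightarrow> hd ys - last xs \<le> d) \<Longrightarrow> finel d (xs @ ys)"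
proof (induction d xs rule: finel.induct)
  case (1 d a b q)
  then show ?case by simp
next
  case ("2_1" d)
  then show ?case by simp
next
  case ("2_2" d a)
  then show ?case by (cases ys) auto
qed

definition lpl :: "real \<Rightarrow> nat \<Rightarrow> real list" where
  "lpl a k = (if a = 0 then [] else map (lin 0 a k) [0..<k])"
definition mpl :: "real \<Rightarrow> real \<Rightarrow> nat \<Rightarrow> real list" where
  "mpl a b k = map (lin a (b - a) k) [0..<Suc k]"
definition rpl :: "real \<Rightarrow> nat \<Rightarrow> real list" where
  "rpl b k = (if b = 1 then [] else map (lin b (1 - b) k) [1..<Suc k])"

lemma mpl_Cons: "mpl a b k = a # map (lin a (b - a) k) [1..<Suc k]"
  unfolding mpl_def by (simp del: upt_Suc add: upt_conv_Cons)

lemma mpl_snoc: "0 < k \<Longrightarrow> mpl a b k = map (lin a (b - a) k) [0..<k] @ [b]"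
  unfolding mpl_def by (simp add: lin_k)

lemma set_lpl: "0 \<le> a \<Longrightarrow> 0 < k \<Longrightarrow> set (lpl a k) \<subseteq> {0..a}"
  unfolding lpl_def using lin_range[of a _ k 0] by auto

lemma set_mpl: "a \<le> b \<Longrightarrow> 0 < k \<Longrightarrow> set (mpl a b k) \<subseteq> {a..b}"
  unfolding mpl_def using lin_range[of "b - a" _ k a] by (auto simp del: upt_Suc)

lemma set_rpl: "b \<le> 1 \<Longrightarrow> 0 < k \<Longrightarrow> set (rpl b k) \<subseteq> {b..1}"
  unfolding rpl_def using lin_range[of "1 - b" _ k b] by (auto simp del: upt_Suc)

lemma qk_part:
  assumes ab: "0 \<le> a" "a < b" "b \<le> 1" and k: "0 < k"
  shows "part01 (lpl a k @ mpl a b k @ rpl b k)" "finel (1 / real k) (lpl a k @ mpl a b k @ rpl b k)"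
proof -
  have sl: "sorted (lpl a k)" unfolding lpl_def using ab by (auto simp del: upt_Suc intro: lin_sorted)
  have sm: "sorted (mpl a b k)" unfolding mpl_def by (rule lin_sorted) (use ab in simp)
  have sr: "sorted (rpl b k)" unfolding rpl_def using ab by (auto simp del: upt_Suc intro: lin_sorted)
  have Sl: "set (lpl a k) \<subseteq> {0..a}" using set_lpl ab k by auto
  have Sm: "set (mpl a b k) \<subseteq> {a..b}" using set_mpl ab k by auto
  have Sr: "set (rpl b k) \<subseteq> {b..1}" using set_rpl ab k by auto
  have c1: "\<forall>u\<in>set (mpl a b k). \<forall>v\<in>set (rpl b k). u \<le> v"
  proof (intro ballI)
    fix u v assume "u \<in> set (mpl a b k)" "v \<in> set (rpl b k)"
    then have "u \<le> b" "b \<le> v" using Sm Sr by auto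
    then show "u \<le> v" by linarith
  qed
  have c2: "\<forall>u\<in>set (lpl a k). \<forall>v\<in>set (mpl a b k @ rpl b k). u \<le> v"
  proof (intro ballI)
    fix u v assume "u \<in> set (lpl a k)" "v \<in> set (mpl a b k @ rpl b k)"
    then have "u \<le> a" "a \<le> v" using Sl Sm Sr ab by auto
    then show "u \<le> v" by linarith
  qed
  have "sorted (lpl a k @ mpl a b k @ rpl b k)"
    unfolding sorted_append using sl sm sr c1 c2 by (simp only: sorted_append simp_thms)
  moreover have "set (lpl a k @ mpl a b k @ rpl b k) \<subseteq> {0..1}" using Sl Sm Sr ab by auto
  moreover have "hd (lpl a k @ mpl a b k @ rpl b k) = 0"
    using k by (cases "a = 0") (auto simp: lpl_def mpl_Cons hd_map simp del: upt_Suc)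
  moreover have "last (lpl a k @ mpl a b k @ rpl b k) = 1"
  proof (cases "b = 1")
    case True then show ?thesis using k by (simp add: rpl_def mpl_snoc)
  next
    case False then show ?thesis using k by (simp del: upt_Suc add: rpl_def last_map lin_k)
  qed
  moreover have "mpl a b k \<noteq> []" by (simp add: mpl_Cons)
  ultimately show "part01 (lpl a k @ mpl a b k @ rpl b k)" unfolding part01_def by simp
  have fl: "finel (1 / real k) (lpl a k)" unfolding lpl_def using ab k by (auto simp del: upt_Suc intro: lin_finel)
  have fm: "finel (1 / real k) (mpl a b k)" unfolding mpl_def by (rule lin_finel) (use ab k in auto)
  have fr: "finel (1 / real k) (rpl b k)" unfolding rpl_def using ab k by (auto simp del: upt_Suc intro: lin_finel)
  have fmr: "finel (1 / real k) (mpl a b k @ rpl b k)"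
  proof (rule finel_append[OF fm fr])
    assume ne: "rpl b k \<noteq> []"
    then have b1: "b \<noteq> 1" unfolding rpl_def by auto
    have "hd (rpl b k) = lin b (1 - b) k 1" using b1 k unfolding rpl_def by (simp del: upt_Suc add: hd_map)
    moreover have "last (mpl a b k) = b" using k by (simp add: mpl_snoc)
    moreover have "lin b (1 - b) k 1 - b \<le> 1 / real k" unfolding lin_def using ab k by (simp add: divide_right_mono)
    ultimately show "hd (rpl b k) - last (mpl a b k) \<le> 1 / real k" by simp
  qed
  show "finel (1 / real k) (lpl a k @ mpl a b k @ rpl b k)"
  proof (rule finel_append[OF fl fmr])
    assume ne: "lpl a k \<noteq> []"
    then have a0: "a \<noteq> 0" unfolding lpl_def by auto
    have "last (lpl a k) = lin 0 a k (k - 1)" using a0 k unfolding lpl_def by (simp add: last_map)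
    moreover have "hd (mpl a b k @ rpl b k) = a" by (simp add: mpl_Cons)
    moreover have "a - lin 0 a k (k - 1) \<le> 1 / real k"
    proof -
      have "a - lin 0 a k (k - 1) = a / real k" unfolding lin_def using k by (simp add: of_nat_diff field_simps)
      then show ?thesis using ab k by (simp add: divide_right_mono)
    qed
    ultimately show "hd (mpl a b k @ rpl b k) - last (lpl a k) \<le> 1 / real k" by simp
  qed
qed

lemma qk_rsum:
  assumes k: "0 < k"
  shows "rsum g x (lpl a k @ mpl a b k @ rpl b k) = rsum g x (lpl a k @ [a]) + rsum g x (mpl a b k) + rsum g x (b # rpl b k)"
proof -
  define mt where "mt = map (lin a (b - a) k) [1..<Suc k]"
  define mb where "mb = map (lin a (b - a) k) [0..<k]"
  have 1: "rsum g x (lpl a k @ mpl a b k @ rpl b k) = rsum g x (lpl a k @ [a]) + rsum g x (a # mt @ rpl b k)"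
    using rsum_append[of g x "lpl a k" a "mt @ rpl b k"] unfolding mpl_Cons mt_def by simp
  have e: "a # mt @ rpl b k = mb @ b # rpl b k" using mpl_Cons[of a b k] mpl_snoc[OF k, of a b]
    unfolding mt_def mb_def by simp
  have "rsum g x (a # mt @ rpl b k) = rsum g x (mb @ b # rpl b k)" by (simp only: e)
  also have "\<dots> = rsum g x (mb @ [b]) + rsum g x (b # rpl b k)" by (rule rsum_append[symmetric])
  also have "mb @ [b] = mpl a b k" using mpl_snoc[OF k, of a b] unfolding mb_def by simp
  finally have 2: "rsum g x (a # mt @ rpl b k) = rsum g x (mpl a b k) + rsum g x (b # rpl b k)" .
  show ?thesis using 1 2 by simp
qed

lemma rsum_in_span: "rsum g f l \<in> span (set (incr_list f l))"
proof (induction g f l rule: rsum.induct)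
  case (1 g x a b q)
  have "rsum g x (b # q) \<in> span (set (incr_list x (a # b # q)))"
    using 1 span_mono[of "set (incr_list x (b # q))" "set (incr_list x (a # b # q))"] by auto
  moreover have "g a *\<^sub>R (x b - x a) \<in> span (set (incr_list x (a # b # q)))"
    by (intro span_scale span_base) simp
  ultimately show ?case by (simp add: span_add)
qed (auto simp: span_zero)

lemma core_k:
  fixes f :: "real \<Rightarrow> 'h::real_inner"
  assumes A1: "assumption1 f C \<theta>" and A3: "assumption3 f \<beta>" and A4: "assumption4 f"
    and ab: "0 \<le> a" "a < b" "b \<le> 1" and k: "0 < k" and c: "0 < c" and \<sigma>: "\<bar>\<sigma>\<bar> = 1"
    and gc: "\<forall>t\<in>{a..b}. c \<le> \<sigma> * g t"
  shows "\<beta> * c\<^sup>2 * (norm (f b - f a))\<^sup>2 \<le> (norm (rsum g f (lpl a k @ mpl a b k @ rpl b k)))\<^sup>2"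
proof -
  define t where "t = lin a (b - a) k"
  define ts where "ts = mpl a b k"
  define as where "as = map (\<lambda>i. g (ts!i)) [0..<k]"
  define ss where "ss = (if a = 0 then [] else map (lin 0 a k) [1..<k])"
  define rs where "rs = rpl b k"
  have tsn: "\<And>i. i < Suc k \<Longrightarrow> ts!i = t i" unfolding ts_def mpl_def t_def by (simp del: upt_Suc)
  have lts: "length ts = Suc k" unfolding ts_def mpl_def by simp
  have hdts: "hd ts = a" unfolding ts_def by (simp add: mpl_Cons)
  have lastts: "last ts = b" unfolding ts_def using k by (simp add: mpl_snoc)
  have t0: "t 0 = a" and tk: "t k = b" unfolding t_def using k by (auto simp: lin_k)
  have trange: "\<And>i. i \<le> k \<Longrightarrow> a \<le> t i \<and> t i \<le> b"
    unfolding t_def using lin_range[of "b - a" _ k a] ab k by auto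
  have tmono: "\<And>i j. i \<le> j \<Longrightarrow> t i \<le> t j" unfolding t_def using ab by (simp add: lin_mono)
  have c1: "2 \<le> length ts" using lts k by simp
  have c2: "sorted_wrt (<) ts" unfolding ts_def mpl_def by (rule lin_sorted_strict) (use ab k in auto)
  have c3: "set ts \<subseteq> {0..1}" unfolding ts_def using set_mpl[of a b k] ab k by auto
  have c4: "length as = length ts - 1" unfolding as_def using lts by simp
  have ga: "g a \<noteq> 0" using gc ab c by (metis atLeastAtMost_iff less_le_not_le mult_zero_right order_refl)
  have c5: "\<exists>x\<in>set as. x \<noteq> 0"
  proof -
    have "as!0 = g a" unfolding as_def using k hdts tsn[of 0] t0 by simp
    moreover have "as!0 \<in> set as" unfolding as_def using k by simp
    ultimately show ?thesis using ga by metis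
  qed
  have c6: "set ss \<subseteq> {0..<hd ts}"
  proof (cases "a = 0")
    case False
    have "lin 0 a k j < a \<and> 0 \<le> lin 0 a k j" if "j < k" for j
      using that ab k False by (simp add: lin_def field_simps)
    then show ?thesis unfolding ss_def hdts using False by auto
  qed (simp add: ss_def)
  have c7: "set rs \<subseteq> {last ts<..1}"
  proof (cases "b = 1")
    case False
    have "b < lin b (1 - b) k j \<and> lin b (1 - b) k j \<le> 1" if "1 \<le> j" "j \<le> k" for j
      using lin_strict[of "1 - b" k 0 j b] lin_range[of "1 - b" j k b] that ab k False by auto
    then show ?thesis unfolding rs_def rpl_def lastts using False by (auto simp del: upt_Suc)
  qed (simp add: rs_def rpl_def)
  define \<Phi> where "\<Phi> = (\<Sum>i<length as. as ! i *\<^sub>R (f (ts ! Suc i) - f (ts ! i)))"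
  define L where "L = incr_list f (0 # ss @ [hd ts]) @ incr_list f (last ts # rs)"
  define V where "V = closure (span (set L))"
  have A3': "norm (\<Phi> - orth_proj V \<Phi>)^2 > \<beta> * (norm \<Phi>)^2"
    using A3 c1 c2 c3 c4 c5 c6 c7 unfolding assumption3_def \<Phi>_def V_def L_def Let_def by blast
  have \<beta>: "0 < \<beta>" using A3 unfolding assumption3_def by simp
  have Phi_t: "\<Phi> = (\<Sum>i<k. g (t i) *\<^sub>R (f (t (Suc i)) - f (t i)))"
    unfolding \<Phi>_def c4 lts as_def by (auto intro!: sum.cong simp: tsn)
  have Phi_r: "\<Phi> = rsum g f (mpl a b k)"
    unfolding \<Phi>_def rsum_nth ts_def[symmetric] c4 as_def by (auto intro!: sum.cong simp: lts)
  define v where "v = rsum g f (lpl a k @ [a]) + rsum g f (b # rpl b k)"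
  have v1: "rsum g f (lpl a k @ [a]) \<in> span (set (incr_list f (0 # ss @ [hd ts])))"
  proof (cases "a = 0")
    case True then show ?thesis by (simp add: lpl_def span_zero)
  next
    case False
    have "lpl a k @ [a] = 0 # ss @ [hd ts]" unfolding lpl_def ss_def hdts using False k
      by (simp del: upt_Suc add: upt_conv_Cons)
    then show ?thesis using rsum_in_span by metis
  qed
  have v2: "rsum g f (b # rpl b k) \<in> span (set (incr_list f (last ts # rs)))"
    unfolding lastts rs_def by (rule rsum_in_span)
  have "v \<in> span (set L)" unfolding v_def L_def
    by (rule span_add) (use v1 v2 span_mono[of _ "set (incr_list f (0 # ss @ [hd ts]) @ incr_list f (last ts # rs))"] in auto)
  then have vV: "v \<in> V" unfolding V_def using closure_subset by blast
  have proj: "norm (\<Phi> - orth_proj V \<Phi>) \<le> norm (\<Phi> + v)"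
    unfolding V_def by (rule orth_proj_min) (use vV V_def in auto)
  have sumq: "\<Phi> + v = rsum g f (lpl a k @ mpl a b k @ rpl b k)"
    unfolding v_def Phi_r qk_rsum[OF k] by (simp add: algebra_simps)
  define D where "D = f b - f a"
  have wnn: "0 \<le> inner (f (t (Suc i)) - f (t i)) D" if "i < k" for i
    using A4 trange[of i] trange[of "Suc i"] tmono[of i "Suc i"] ab that unfolding assumption4_def D_def
    by auto
  have "c * inner D D = c * inner (\<Sum>i<k. f (t (Suc i)) - f (t i)) D"
    using sum_lessThan_telescope[of "\<lambda>i. f (t i)" k] t0 tk unfolding D_def by simp
  also have "\<dots> = (\<Sum>i<k. c * inner (f (t (Suc i)) - f (t i)) D)"
    by (simp add: inner_sum_left sum_distrib_left)
  also have "\<dots> \<le> (\<Sum>i<k. (\<sigma> * g (t i)) * inner (f (t (Suc i)) - f (t i)) D)"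
  proof (rule sum_mono)
    fix i assume i: "i \<in> {..<k}"
    have "c \<le> \<sigma> * g (t i)" using gc trange[of i] i by auto
    then show "c * inner (f (t (Suc i)) - f (t i)) D \<le> (\<sigma> * g (t i)) * inner (f (t (Suc i)) - f (t i)) D"
      using wnn[of i] i by (simp add: mult_right_mono)
  qed
  also have "\<dots> = \<sigma> * inner \<Phi> D"
    unfolding Phi_t by (simp add: inner_sum_left sum_distrib_left algebra_simps)
  also have "\<dots> \<le> \<bar>inner \<Phi> D\<bar>"
  proof -
    have "\<sigma> * inner \<Phi> D \<le> \<bar>\<sigma> * inner \<Phi> D\<bar>" by simp
    then show ?thesis using \<sigma> by (simp add: abs_mult)
  qed
  also have "\<dots> \<le> norm \<Phi> * norm D" by (rule Cauchy_Schwarz_ineq2)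
  finally have cs: "c * (norm D)\<^sup>2 \<le> norm \<Phi> * norm D" by (simp add: power2_norm_eq_inner)
  have Dpos: "0 < norm D" using A1 ab unfolding assumption1_def D_def by auto
  have "c * norm D \<le> norm \<Phi>"
  proof -
    have "(c * norm D) * norm D \<le> norm \<Phi> * norm D" using cs by (simp add: power2_eq_square mult.assoc)
    then show ?thesis using Dpos by simp
  qed
  then have "(c * norm D)\<^sup>2 \<le> (norm \<Phi>)\<^sup>2" by (rule power_mono) (use c Dpos in simp)
  then have "\<beta> * c\<^sup>2 * (norm D)\<^sup>2 \<le> \<beta> * (norm \<Phi>)\<^sup>2" using \<beta> by (simp add: power_mult_distrib)
  also have "\<dots> \<le> (norm (\<Phi> - orth_proj V \<Phi>))^2" using A3' by simp
  also have "\<dots> \<le> (norm (\<Phi> + v))\<^sup>2" by (rule power_mono[OF proj]) simp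
  finally show ?thesis unfolding sumq D_def .
qed

lemma core:
  fixes f :: "real \<Rightarrow> 'h::real_inner"
  assumes A1: "assumption1 f C \<theta>" and A3: "assumption3 f \<beta>" and A4: "assumption4 f"
    and ab: "0 \<le> a" "a < b" "b \<le> 1" and c: "0 < c" and \<sigma>: "\<bar>\<sigma>\<bar> = 1"
    and gc: "\<forall>t\<in>{a..b}. c \<le> \<sigma> * g t"
    and F: "\<forall>\<epsilon>>0. \<exists>\<delta>>0. \<forall>q. part01 q \<and> finel \<delta> q \<longrightarrow> norm (rsum g f q - F) < \<epsilon>"
  shows "\<beta> * c\<^sup>2 * (norm (f b - f a))\<^sup>2 \<le> (norm F)\<^sup>2"
proof -
  define X where "X = \<beta> * c\<^sup>2 * (norm (f b - f a))\<^sup>2"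
  have \<beta>: "0 < \<beta>" using A3 unfolding assumption3_def by simp
  have X0: "0 \<le> X" unfolding X_def using \<beta> by simp
  define B where "B = sqrt X"
  have Bk: "B \<le> norm (rsum g f (lpl a k @ mpl a b k @ rpl b k))" if k: "0 < k" for k
  proof -
    have "X \<le> (norm (rsum g f (lpl a k @ mpl a b k @ rpl b k)))\<^sup>2"
      unfolding X_def by (rule core_k[OF A1 A3 A4 ab k c \<sigma> gc])
    then have "sqrt X \<le> sqrt ((norm (rsum g f (lpl a k @ mpl a b k @ rpl b k)))\<^sup>2)"
      by (rule real_sqrt_le_mono)
    then show ?thesis unfolding B_def by simp
  qed
  have "B \<le> norm F"
  proof (rule field_le_epsilon)
    fix e :: real assume e: "0 < e"
    obtain \<delta> where d: "\<delta> > 0" "\<forall>q. part01 q \<and> finel \<delta> q \<longrightarrow> norm (rsum g f q - F) < e"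
      using F e by blast
    obtain n where n: "inverse (real (Suc n)) < \<delta>" using reals_Archimedean[OF d(1)] by auto
    define q where "q = lpl a (Suc n) @ mpl a b (Suc n) @ rpl b (Suc n)"
    have pq: "part01 q" "finel (1 / real (Suc n)) q" unfolding q_def using qk_part[OF ab, of "Suc n"] by auto
    have "finel \<delta> q" by (rule finel_mono[OF pq(2)]) (use n in \<open>simp add: inverse_eq_divide\<close>)
    then have "norm (rsum g f q - F) < e" using d pq by blast
    moreover have "B \<le> norm (rsum g f q)" unfolding q_def by (rule Bk) simp
    moreover have "norm (rsum g f q) \<le> norm (rsum g f q - F) + norm F" using norm_triangle_ineq[of "rsum g f q - F" F] by simp
    ultimately show "B \<le> norm F + e" by linarith
  qed
  then have "B\<^sup>2 \<le> (norm F)\<^sup>2" by (rule power_mono) (simp add: B_def X0)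
  then show ?thesis using X0 unfolding B_def X_def by simp
qed

definition iso_setup :: "'w measure \<Rightarrow> nat \<Rightarrow> ('h::real_inner \<Rightarrow> 'w \<Rightarrow> real) \<Rightarrow> bool" where
  "iso_setup M n I \<longleftrightarrow> prob_space M \<and> (\<forall>h. I h \<in> borel_measurable M) \<and>
     (\<forall>h. integrable M (\<lambda>\<omega>. (I h \<omega>)\<^sup>2)) \<and> (\<forall>h k. (\<integral>\<omega>. I h \<omega> * I k \<omega> \<partial>M) = fact n * inner h k)"

lemma absprod: "\<bar>a * b\<bar> \<le> a\<^sup>2 + (b::real)\<^sup>2"
proof -
  have "0 \<le> (a - b)\<^sup>2" "0 \<le> (a + b)\<^sup>2" by simp_all
  then show ?thesis unfolding power2_diff power2_sum abs_le_iff by (simp add: power2_eq_square)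
qed

lemma iso_meas: "iso_setup M n I \<Longrightarrow> I h \<in> borel_measurable M"
  unfolding iso_setup_def by simp

lemma iso_prod_int:
  assumes S: "iso_setup M n I"
  shows "integrable M (\<lambda>\<omega>. I h \<omega> * I k \<omega>)"
proof (rule Bochner_Integration.integrable_bound)
  show "integrable M (\<lambda>\<omega>. (I h \<omega>)\<^sup>2 + (I k \<omega>)\<^sup>2)"
    using S unfolding iso_setup_def by (intro Bochner_Integration.integrable_add) auto
  show "(\<lambda>\<omega>. I h \<omega> * I k \<omega>) \<in> borel_measurable M"
    using S unfolding iso_setup_def by (intro borel_measurable_times) auto
  show "AE \<omega> in M. norm (I h \<omega> * I k \<omega>) \<le> norm ((I h \<omega>)\<^sup>2 + (I k \<omega>)\<^sup>2)"
    using absprod by (auto simp del: abs_mult)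
qed

lemma iso_int:
  assumes S: "iso_setup M n I"
  shows "(\<integral>\<omega>. I h \<omega> * I k \<omega> \<partial>M) = fact n * inner h k"
  using S unfolding iso_setup_def by simp

lemma sum_sq:
  assumes S: "iso_setup M n I" and A: "finite A"
  shows "integrable M (\<lambda>\<omega>. (\<Sum>i\<in>A. a i * I (h i) \<omega>)\<^sup>2)"
    "(\<integral>\<omega>. (\<Sum>i\<in>A. a i * I (h i) \<omega>)\<^sup>2 \<partial>M) = fact n * (norm (\<Sum>i\<in>A. a i *\<^sub>R h i))\<^sup>2"
proof -
  have eq: "(\<lambda>\<omega>. (\<Sum>i\<in>A. a i * I (h i) \<omega>)\<^sup>2) = (\<lambda>\<omega>. \<Sum>i\<in>A. \<Sum>j\<in>A. (a i * a j) * (I (h i) \<omega> * I (h j) \<omega>))"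
    by (auto simp: power2_eq_square sum_product algebra_simps)
  show "integrable M (\<lambda>\<omega>. (\<Sum>i\<in>A. a i * I (h i) \<omega>)\<^sup>2)"
    unfolding eq by (simp add: iso_prod_int[OF S])
  have "(\<integral>\<omega>. (\<Sum>i\<in>A. a i * I (h i) \<omega>)\<^sup>2 \<partial>M) = (\<Sum>i\<in>A. \<Sum>j\<in>A. (a i * a j) * (fact n * inner (h i) (h j)))"
    unfolding eq
    by (simp add: integral_sum integrable_sum integrable_mult_right iso_prod_int[OF S] iso_int[OF S])
  also have "\<dots> = fact n * inner (\<Sum>i\<in>A. a i *\<^sub>R h i) (\<Sum>j\<in>A. a j *\<^sub>R h j)"
    by (simp add: inner_sum_left inner_sum_right sum_distrib_left algebra_simps inner_commute)
  finally show "(\<integral>\<omega>. (\<Sum>i\<in>A. a i * I (h i) \<omega>)\<^sup>2 \<partial>M) = fact n * (norm (\<Sum>i\<in>A. a i *\<^sub>R h i))\<^sup>2"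
    by (simp add: power2_norm_eq_inner)
qed

lemma linear_AE:
  assumes S: "iso_setup M n I" and A: "finite A"
  shows "AE \<omega> in M. I (\<Sum>i\<in>A. a i *\<^sub>R h i) \<omega> = (\<Sum>i\<in>A. a i * I (h i) \<omega>)"
proof -
  define w where "w = (\<Sum>i\<in>A. a i *\<^sub>R h i)"
  define Z where "Z \<omega> = (\<Sum>i\<in>A. a i * I (h i) \<omega>)" for \<omega>
  have iZ: "integrable M (\<lambda>\<omega>. (Z \<omega>)\<^sup>2)" "(\<integral>\<omega>. (Z \<omega>)\<^sup>2 \<partial>M) = fact n * (norm w)\<^sup>2"
    using sum_sq[OF S A, of a h] unfolding Z_def w_def by auto
  have iW: "integrable M (\<lambda>\<omega>. (I w \<omega>)\<^sup>2)" using S unfolding iso_setup_def by auto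
  have iWW: "(\<integral>\<omega>. (I w \<omega>)\<^sup>2 \<partial>M) = fact n * (norm w)\<^sup>2"
  proof -
    have "(norm w)\<^sup>2 = inner w w" by (simp add: power2_norm_eq_inner)
    then show ?thesis using iso_int[OF S, of w w] by (simp add: power2_eq_square)
  qed
  have eqWZ: "(\<lambda>\<omega>. I w \<omega> * Z \<omega>) = (\<lambda>\<omega>. \<Sum>i\<in>A. a i * (I w \<omega> * I (h i) \<omega>))"
    unfolding Z_def by (auto simp: sum_distrib_left algebra_simps)
  have iWZ: "integrable M (\<lambda>\<omega>. I w \<omega> * Z \<omega>)"
    unfolding eqWZ by (simp add: iso_prod_int[OF S])
  have WZ: "(\<integral>\<omega>. I w \<omega> * Z \<omega> \<partial>M) = fact n * (norm w)\<^sup>2"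
  proof -
    have "(\<integral>\<omega>. I w \<omega> * Z \<omega> \<partial>M) = (\<Sum>i\<in>A. a i * (fact n * inner w (h i)))"
      unfolding eqWZ
      by (simp add: integral_sum integrable_mult_right iso_prod_int[OF S] iso_int[OF S])
    also have "\<dots> = fact n * inner w w"
      by (simp add: w_def[symmetric] inner_sum_right sum_distrib_left algebra_simps)
      (simp add: w_def inner_sum_right sum_distrib_left algebra_simps)
    finally show ?thesis by (simp add: power2_norm_eq_inner)
  qed
  have eq: "(\<lambda>\<omega>. (I w \<omega> - Z \<omega>)\<^sup>2) = (\<lambda>\<omega>. (I w \<omega>)\<^sup>2 - 2 * (I w \<omega> * Z \<omega>) + (Z \<omega>)\<^sup>2)"
    by (auto simp: power2_diff)
  have int: "integrable M (\<lambda>\<omega>. (I w \<omega> - Z \<omega>)\<^sup>2)"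
  proof -
    have "integrable M (\<lambda>\<omega>. 2 * (I w \<omega> * Z \<omega>))" using iWZ by simp
    then have "integrable M (\<lambda>\<omega>. (I w \<omega>)\<^sup>2 - 2 * (I w \<omega> * Z \<omega>))"
      using iW by (rule Bochner_Integration.integrable_diff[rotated])
    then show ?thesis unfolding eq using iZ(1) by (rule Bochner_Integration.integrable_add)
  qed
  have "(\<integral>\<omega>. (I w \<omega> - Z \<omega>)\<^sup>2 \<partial>M) = 0"
    unfolding eq using iW iWZ iZ iWW WZ
    by (simp add: integral_add integral_diff integrable_diff integrable_mult_right)
  then have "AE \<omega> in M. (I w \<omega> - Z \<omega>)\<^sup>2 = 0"
    using integral_nonneg_eq_0_iff_AE[OF int] by simp
  then show ?thesis unfolding w_def[symmetric] Z_def[symmetric] by eventually_elim simp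
qed

lemma diff_AE:
  assumes S: "iso_setup M n I"
  shows "AE \<omega> in M. I (u - v) \<omega> = I u \<omega> - I v \<omega>"
proof -
  have "AE \<omega> in M. I (\<Sum>i\<in>{0::nat, 1}. (if i = 0 then 1 else -1) *\<^sub>R (if i = 0 then u else v)) \<omega>
      = (\<Sum>i\<in>{0::nat, 1}. (if i = 0 then 1 else -1) * I (if i = 0 then u else v) \<omega>)"
    by (rule linear_AE[OF S]) simp
  then show ?thesis by simp
qed

lemma diff_sq:
  assumes S: "iso_setup M n I"
  shows "integrable M (\<lambda>\<omega>. (I u \<omega> - I v \<omega>)\<^sup>2)" "(\<integral>\<omega>. (I u \<omega> - I v \<omega>)\<^sup>2 \<partial>M) = fact n * (norm (u - v))\<^sup>2"
proof -
  have e: "(\<lambda>\<omega>. (I u \<omega> - I v \<omega>)\<^sup>2) = (\<lambda>\<omega>. (\<Sum>i\<in>{0::nat, 1}. (if i = 0 then 1 else -1) * I (if i = 0 then u else v) \<omega>)\<^sup>2)"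
    by auto
  have e2: "(\<Sum>i\<in>{0::nat, 1}. (if i = 0 then 1 else -1) *\<^sub>R (if i = 0 then u else v)) = u - v" by simp
  show "integrable M (\<lambda>\<omega>. (I u \<omega> - I v \<omega>)\<^sup>2)" unfolding e by (rule sum_sq[OF S]) simp
  have "(\<integral>\<omega>. (I u \<omega> - I v \<omega>)\<^sup>2 \<partial>M) = fact n * (norm (\<Sum>i\<in>{0::nat, 1}. (if i = 0 then 1 else -1) *\<^sub>R (if i = 0 then u else v)))\<^sup>2"
    unfolding e by (rule sum_sq(2)[OF S]) simp
  then show "(\<integral>\<omega>. (I u \<omega> - I v \<omega>)\<^sup>2 \<partial>M) = fact n * (norm (u - v))\<^sup>2"
    unfolding e2 .
qed

lemma cm_meas:
  fixes f g :: "'w \<Rightarrow> real"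
  assumes cm: "complete_measure M" and f: "f \<in> borel_measurable M" and ae: "AE x in M. f x = g x"
  shows "g \<in> borel_measurable M"
proof (rule measurableI)
  fix x assume "x \<in> space M" then show "g x \<in> space borel" by simp
next
  fix A :: "real set" assume A: "A \<in> sets borel"
  show "g -` A \<inter> space M \<in> sets M"
  proof (rule complete_measure.in_sets_AE[OF cm])
    show "f -` A \<inter> space M \<in> sets M" using f A by (rule measurable_sets)
    show "g -` A \<inter> space M \<subseteq> space M" by auto
    show "AE x in M. (x \<in> f -` A \<inter> space M) = (x \<in> g -` A \<inter> space M)"
      using ae by eventually_elim auto
  qed
qed

lemma conv_U:
  assumes "\<forall>\<epsilon>>0. \<exists>\<delta>>0. \<forall>q. part01 q \<and> finel \<delta> q \<longrightarrow> norm (rsum g x q - L) < \<epsilon>"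
  shows "(\<lambda>k. rsum g x (U k)) \<longlonglongrightarrow> L"
proof (rule LIMSEQ_I)
  fix r :: real assume r: "0 < r"
  obtain \<delta> where d: "\<delta> > 0" "\<forall>q. part01 q \<and> finel \<delta> q \<longrightarrow> norm (rsum g x q - L) < r"
    using assms r by blast
  obtain N where N: "inverse (real (Suc N)) < \<delta>" using reals_Archimedean[OF d(1)] by auto
  have "\<forall>k\<ge>N. norm (rsum g x (U k) - L) < r"
    using d(2) U_part01 U_fine_ge[OF N] by blast
  then show "\<exists>no. \<forall>k\<ge>no. norm (rsum g x (U k) - L) < r" by blast
qed

lemma U_in01: "t \<in> set (U k) \<Longrightarrow> t \<in> {0..1}"
  using U_part01[of k] unfolding part01_def by auto

lemma S_eq_AE:
  fixes f :: "real \<Rightarrow> 'h::real_inner"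
  assumes S: "iso_setup M n I"
    and Xv: "\<And>t. t \<in> {0..1} \<Longrightarrow> AE \<omega> in M. X t \<omega> = I (f t) \<omega>"
  shows "AE \<omega> in M. rsum g (\<lambda>t. X t \<omega>) (U k) = I (rsum g f (U k)) \<omega>"
proof -
  define u where "u = U k"
  define m where "m = length u - 1"
  have Fk: "rsum g f u = (\<Sum>i\<in>{..<m}. g (u!i) *\<^sub>R (f (u!Suc i) - f (u!i)))"
    unfolding rsum_nth m_def ..
  have a1: "AE \<omega> in M. I (rsum g f u) \<omega> = (\<Sum>i\<in>{..<m}. g (u!i) * I (f (u!Suc i) - f (u!i)) \<omega>)"
    unfolding Fk by (rule linear_AE[OF S]) simp
  have a2: "AE \<omega> in M. \<forall>i\<in>{..<m}. I (f (u!Suc i) - f (u!i)) \<omega> = I (f (u!Suc i)) \<omega> - I (f (u!i)) \<omega>"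
    by (rule AE_finite_allI) (auto intro: diff_AE[OF S])
  have a3: "AE \<omega> in M. \<forall>t\<in>set u. X t \<omega> = I (f t) \<omega>"
    by (rule AE_finite_allI) (auto intro: Xv U_in01 simp: u_def)
  have m: "\<And>i. i < m \<Longrightarrow> u!i \<in> set u \<and> u!Suc i \<in> set u" unfolding m_def by auto
  show ?thesis unfolding u_def[symmetric]
  proof (rule AE_mp[OF AE_conjI[OF a1 AE_conjI[OF a2 a3]]], rule AE_I2, intro impI)
    fix \<omega> assume H: "I (rsum g f u) \<omega> = (\<Sum>i\<in>{..<m}. g (u!i) * I (f (u!Suc i) - f (u!i)) \<omega>) \<and>
       (\<forall>i\<in>{..<m}. I (f (u!Suc i) - f (u!i)) \<omega> = I (f (u!Suc i)) \<omega> - I (f (u!i)) \<omega>) \<and>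
       (\<forall>t\<in>set u. X t \<omega> = I (f t) \<omega>)"
    have "rsum g (\<lambda>t. X t \<omega>) u = (\<Sum>i\<in>{..<m}. g (u!i) * (X (u!Suc i) \<omega> - X (u!i) \<omega>))"
      unfolding rsum_nth m_def by simp
    also have "\<dots> = (\<Sum>i\<in>{..<m}. g (u!i) * I (f (u!Suc i) - f (u!i)) \<omega>)"
      by (rule sum.cong) (use H m in auto)
    also have "\<dots> = I (rsum g f u) \<omega>" using H by simp
    finally show "rsum g (\<lambda>t. X t \<omega>) u = I (rsum g f u) \<omega>" .
  qed
qed

lemma Y_identify:
  fixes f :: "real \<Rightarrow> 'h::real_inner"
  assumes S: "iso_setup M n I"
    and Xv: "\<And>t. t \<in> {0..1} \<Longrightarrow> AE \<omega> in M. X t \<omega> = I (f t) \<omega>"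
    and Yp: "AE \<omega> in M. (\<forall>\<epsilon>>0. \<exists>\<delta>>0. \<forall>q. part01 q \<and> finel \<delta> q \<longrightarrow> \<bar>rsum g (\<lambda>t. X t \<omega>) q - Y \<omega>\<bar> < \<epsilon>)"
    and F: "\<forall>\<epsilon>>0. \<exists>\<delta>>0. \<forall>q. part01 q \<and> finel \<delta> q \<longrightarrow> norm (rsum g f q - F) < \<epsilon>"
  shows "AE \<omega> in M. Y \<omega> = I F \<omega>"
proof -
  define Fk where "Fk k = rsum g f (U k)" for k
  have Sk: "AE \<omega> in M. \<forall>k. rsum g (\<lambda>t. X t \<omega>) (U k) = I (Fk k) \<omega>"
  proof -
    have "AE \<omega> in M. rsum g (\<lambda>t. X t \<omega>) (U k) = I (Fk k) \<omega>" for k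
      unfolding Fk_def by (rule S_eq_AE[OF S]) (rule Xv)
    then show ?thesis unfolding AE_all_countable by blast
  qed
  have FkF: "Fk \<longlonglongrightarrow> F" unfolding Fk_def by (rule conv_U[OF F])
  define D where "D k \<omega> = ennreal ((I (Fk k) \<omega> - I F \<omega>)\<^sup>2)" for k \<omega>
  have Dm: "\<And>k. D k \<in> borel_measurable M" unfolding D_def using iso_meas[OF S] by measurable
  have intD: "(\<integral>\<^sup>+ \<omega>. D k \<omega> \<partial>M) = ennreal (fact n * (norm (Fk k - F))\<^sup>2)" for k
    unfolding D_def using nn_integral_eq_integral[OF diff_sq(1)[OF S, of "Fk k" F]] diff_sq(2)[OF S, of "Fk k" F]
    by simp
  have "(\<lambda>k. fact n * (norm (Fk k - F))\<^sup>2) \<longlonglongrightarrow> fact n * (norm (F - F))\<^sup>2"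
    by (intro tendsto_intros FkF)
  then have "(\<lambda>k. ennreal (fact n * (norm (Fk k - F))\<^sup>2)) \<longlonglongrightarrow> ennreal 0" by (intro tendsto_ennrealI) simp
  then have "liminf (\<lambda>k. \<integral>\<^sup>+ \<omega>. D k \<omega> \<partial>M) = 0" unfolding intD
    by (intro lim_imp_Liminf) simp_all
  moreover have "(\<integral>\<^sup>+ \<omega>. liminf (\<lambda>k. D k \<omega>) \<partial>M) \<le> liminf (\<lambda>k. \<integral>\<^sup>+ \<omega>. D k \<omega> \<partial>M)"
    by (rule nn_integral_liminf[OF Dm])
  ultimately have "(\<integral>\<^sup>+ \<omega>. liminf (\<lambda>k. D k \<omega>) \<partial>M) = 0" by simp
  then have L0: "AE \<omega> in M. liminf (\<lambda>k. D k \<omega>) = 0"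
    by (subst (asm) nn_integral_0_iff_AE) (use Dm in \<open>auto intro: borel_measurable_liminf\<close>)
  show ?thesis
  proof (rule AE_mp[OF AE_conjI[OF L0 AE_conjI[OF Sk Yp]]], rule AE_I2, intro impI)
    fix \<omega> assume H: "liminf (\<lambda>k. D k \<omega>) = 0 \<and> (\<forall>k. rsum g (\<lambda>t. X t \<omega>) (U k) = I (Fk k) \<omega>) \<and>
      (\<forall>\<epsilon>>0. \<exists>\<delta>>0. \<forall>q. part01 q \<and> finel \<delta> q \<longrightarrow> \<bar>rsum g (\<lambda>t. X t \<omega>) q - Y \<omega>\<bar> < \<epsilon>)"
    have "(\<lambda>k. rsum g (\<lambda>t. X t \<omega>) (U k)) \<longlonglongrightarrow> Y \<omega>" by (rule conv_U) (use H in simp)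
    then have "(\<lambda>k. I (Fk k) \<omega>) \<longlonglongrightarrow> Y \<omega>" using H by simp
    then have "(\<lambda>k. D k \<omega>) \<longlonglongrightarrow> ennreal ((Y \<omega> - I F \<omega>)\<^sup>2)" unfolding D_def
      by (intro tendsto_ennrealI tendsto_intros)
    then have "liminf (\<lambda>k. D k \<omega>) = ennreal ((Y \<omega> - I F \<omega>)\<^sup>2)" by (intro lim_imp_Liminf) simp_all
    then have "(Y \<omega> - I F \<omega>)\<^sup>2 \<le> 0" using H by (simp add: ennreal_eq_0_iff)
    then show "Y \<omega> = I F \<omega>" by simp
  qed
qed

lemma holder_cont:
  fixes g :: "real \<Rightarrow> real" and K \<tau> :: real
  assumes \<tau>: "0 < \<tau>" and K: "0 \<le> K"
    and H: "\<And>s t. s \<in> {0..1} \<Longrightarrow> t \<in> {0..1} \<Longrightarrow> \<bar>g t - g s\<bar> \<le> K * \<bar>t - s\<bar> powr \<tau>"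
  shows "continuous_on {0..1} g"
  unfolding continuous_on_iff
proof (intro ballI allI impI)
  fix x e :: real assume x: "x \<in> {0..1}" and e: "0 < e"
  define d where "d = (e / (K + 1)) powr (1 / \<tau>)"
  have d0: "0 < d" unfolding d_def using e K by simp
  have dp: "d powr \<tau> = e / (K + 1)" unfolding d_def powr_powr using \<tau> e K by simp
  show "\<exists>d>0. \<forall>x'\<in>{0..1}. dist x' x < d \<longrightarrow> dist (g x') (g x) < e"
  proof (intro exI[of _ d] conjI ballI impI)
    fix x' assume x': "x' \<in> {0..1}" and dx: "dist x' x < d"
    have "\<bar>x' - x\<bar> powr \<tau> < d powr \<tau>" by (rule powr_less_mono2) (use \<tau> dx in \<open>auto simp: dist_real_def\<close>)
    then have "\<bar>x' - x\<bar> powr \<tau> < e / (K + 1)" using dp by simp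
    then have "(K + 1) * \<bar>x' - x\<bar> powr \<tau> < (K + 1) * (e / (K + 1))"
      by (rule mult_strict_left_mono) (use K in simp)
    then have "(K + 1) * \<bar>x' - x\<bar> powr \<tau> < e" using K by simp
    moreover have "\<bar>g x' - g x\<bar> \<le> K * \<bar>x' - x\<bar> powr \<tau>" using H x x' by simp
    moreover have "K * \<bar>x' - x\<bar> powr \<tau> \<le> (K + 1) * \<bar>x' - x\<bar> powr \<tau>" by (simp add: mult_right_mono)
    ultimately show "dist (g x') (g x) < e" unfolding dist_real_def by linarith
  qed (rule d0)
qed

lemma holder_norm_props:
  assumes g: "holder_on \<tau> g" and \<tau>: "0 < \<tau>"
  shows "0 \<le> holder_norm \<tau> g"
    "\<And>s t. s \<in> {0..1} \<Longrightarrow> t \<in> {0..1} \<Longrightarrow> \<bar>g t - g s\<bar> \<le> holder_norm \<tau> g * \<bar>t - s\<bar> powr \<tau>"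
    "(\<forall>r\<in>{0..1}. g r = 0) \<Longrightarrow> holder_norm \<tau> g = 0"
proof -
  obtain Kg where Kg: "0 \<le> Kg" "\<And>s t. s \<in> {0..1} \<Longrightarrow> t \<in> {0..1} \<Longrightarrow> \<bar>g t - g s\<bar> \<le> Kg * \<bar>t - s\<bar> powr \<tau>"
    using holder_on_K[OF g] by blast
  define hs where "hs = {(s,t). s \<in> {0..1} \<and> t \<in> {0..1} \<and> s \<noteq> (t::real)}"
  define hq where "hq st = \<bar>g (snd st) - g (fst st)\<bar> / \<bar>snd st - fst st\<bar> powr \<tau>" for st
  have hn: "holder_norm \<tau> g = (SUP st\<in>hs. hq st)" unfolding holder_norm_def hs_def hq_def ..
  have hsne: "(0, 1) \<in> hs" unfolding hs_def by simp
  have bdd: "bdd_above (hq ` hs)"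
  proof (rule bdd_aboveI2)
    fix st assume "st \<in> hs"
    then obtain s t where st: "st = (s, t)" "s \<in> {0..1}" "t \<in> {0..1}" "s \<noteq> t" unfolding hs_def by auto
    have p: "0 < \<bar>t - s\<bar> powr \<tau>" using st by simp
    show "hq st \<le> Kg" unfolding hq_def st(1) using Kg(2)[OF st(2,3)] p by (simp add: pos_divide_le_eq)
  qed
  have up: "hq st \<le> holder_norm \<tau> g" if "st \<in> hs" for st unfolding hn by (rule cSUP_upper[OF that bdd])
  show "0 \<le> holder_norm \<tau> g" using up[OF hsne] unfolding hq_def by (meson order_trans divide_nonneg_nonneg abs_ge_zero powr_ge_zero)
  show "\<bar>g t - g s\<bar> \<le> holder_norm \<tau> g * \<bar>t - s\<bar> powr \<tau>" if "s \<in> {0..1}" "t \<in> {0..1}" for s t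
  proof (cases "s = t")
    case False
    then have "(s, t) \<in> hs" using that unfolding hs_def by simp
    from up[OF this] have "\<bar>g t - g s\<bar> / \<bar>t - s\<bar> powr \<tau> \<le> holder_norm \<tau> g" unfolding hq_def by simp
    moreover have "0 < \<bar>t - s\<bar> powr \<tau>" using False by simp
    ultimately show ?thesis by (simp add: pos_divide_le_eq)
  qed simp
  show "holder_norm \<tau> g = 0" if z: "\<forall>r\<in>{0..1}. g r = 0"
  proof -
    have "(SUP st\<in>hs. hq st) = (SUP st\<in>hs. 0)"
      by (rule SUP_cong) (use z in \<open>auto simp: hs_def hq_def\<close>)
    also have "\<dots> = 0" by (rule cSUP_const) (use hsne in auto)
    finally show ?thesis unfolding hn .
  qed
qed

theorem proposition4p1:
  fixes M :: "'w measure" and n :: nat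
    and I :: "'h::{real_inner, complete_space} \<Rightarrow> 'w \<Rightarrow> real"
    and f :: "real \<Rightarrow> 'h" and X :: "real \<Rightarrow> 'w \<Rightarrow> real"
    and g :: "real \<Rightarrow> real" and C \<theta> \<beta> \<rho> \<tau> :: real
  assumes "prob_space M" and "complete_measure M"
    and I_meas: "\<And>h. I h \<in> borel_measurable M"
    and I_sq: "\<And>h. integrable M (\<lambda>\<omega>. (I h \<omega>)^2)"
    and I_isometry: "\<And>h k. (\<integral>\<omega>. I h \<omega> * I k \<omega> \<partial>M) = fact n * inner h k"
    and X_version: "\<And>t. t \<in> {0..1} \<Longrightarrow> AE \<omega> in M. X t \<omega> = I (f t) \<omega>"
    and X_cont: "\<And>\<omega>. \<omega> \<in> space M \<Longrightarrow> continuous_on {0..1} (\<lambda>t. X t \<omega>)"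
    and A1: "assumption1 f C \<theta>"
    and A3: "assumption3 f \<beta>"
    and A4: "assumption4 f"
    and rho: "\<rho> < \<theta> / 2"
    and X_holder: "AE \<omega> in M. holder_on \<rho> (\<lambda>t. X t \<omega>)"
    and tau: "0 < \<tau>" "\<tau> \<le> 1" "\<tau> + \<rho> > 1"
    and g_holder: "holder_on \<tau> g"
    and g_nonzero: "holder_norm \<tau> g \<noteq> 0"
  shows "(\<integral>\<omega>. (young_integral g (\<lambda>t. X t \<omega>))^2 \<partial>M)
            \<ge> \<beta> / 4 * (SUP r\<in>{0..1}. \<bar>g r\<bar>)^2 * (\<integral>\<omega>. (X 1 \<omega>)^2 \<partial>M)
       \<or> (\<exists>a b. 0 \<le> a \<and> a \<le> b \<and> b \<le> 1 \<and>
            ((SUP r\<in>{0..1}. \<bar>g r\<bar>) / (2 * holder_norm \<tau> g)) powr (1 / \<tau>) \<le> \<bar>b - a\<bar> \<and>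
            (\<integral>\<omega>. (young_integral g (\<lambda>t. X t \<omega>))^2 \<partial>M)
              \<ge> \<beta> / 4 * (SUP r\<in>{0..1}. \<bar>g r\<bar>)^2 * (\<integral>\<omega>. (X b \<omega> - X a \<omega>)^2 \<partial>M))"
proof -
  have S: "iso_setup M n I" using assms(1) I_meas I_sq I_isometry unfolding iso_setup_def by auto
  note cm = assms(2)
  have C0: "0 < C" and th: "1 < \<theta>" and f0: "f 0 = 0" using A1 unfolding assumption1_def by auto
  have \<beta>0: "0 < \<beta>" using A3 unfolding assumption3_def by auto
  have rho0: "0 < \<rho>" using tau by linarith
  have fH: "norm (f t - f s) \<le> C * \<bar>t - s\<bar> powr (\<theta> / 2)" if "s \<in> {0..1}" "t \<in> {0..1}" for s t
  proof (cases s t rule: linorder_cases)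
    case less then show ?thesis using A1 that unfolding assumption1_def by auto
  next
    case equal then show ?thesis by simp
  next
    case greater
    then have "norm (f s - f t) \<le> C * (s - t) powr (\<theta> / 2)" using A1 that unfolding assumption1_def by auto
    then show ?thesis using greater by (simp add: norm_minus_commute)
  qed
  obtain Kg where Kg: "0 \<le> Kg" "\<And>s t. s \<in> {0..1} \<Longrightarrow> t \<in> {0..1} \<Longrightarrow> \<bar>g t - g s\<bar> \<le> Kg * \<bar>t - s\<bar> powr \<tau>"
    using holder_on_K[OF g_holder] by blast
  have yHf: "yH g f (Kg * C) (\<tau> + \<theta> / 2)"
    by (rule holder_yH[OF Kg(2) fH]) (use tau th Kg C0 in auto)
  have gam: "1 < \<tau> + \<theta> / 2" using tau rho by linarith
  obtain F where F: "\<forall>\<epsilon>>0. \<exists>\<delta>>0. \<forall>q. part01 q \<and> finel \<delta> q \<longrightarrow> norm (rsum g f q - F) < \<epsilon>"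
    using young_exists[OF yHf _ gam] Kg C0 by auto
  define Y where "Y \<omega> = young_integral g (\<lambda>t. X t \<omega>)" for \<omega>
  have Yp: "AE \<omega> in M. (\<forall>\<epsilon>>0. \<exists>\<delta>>0. \<forall>q. part01 q \<and> finel \<delta> q \<longrightarrow> \<bar>rsum g (\<lambda>t. X t \<omega>) q - Y \<omega>\<bar> < \<epsilon>)"
    using X_holder
  proof eventually_elim
    case (elim \<omega>)
    obtain Kx where Kx: "0 \<le> Kx" "\<And>s t. s \<in> {0..1} \<Longrightarrow> t \<in> {0..1} \<Longrightarrow> \<bar>X t \<omega> - X s \<omega>\<bar> \<le> Kx * \<bar>t - s\<bar> powr \<rho>"
      using holder_on_K[OF elim] by blast
    have yHx: "yH g (\<lambda>t. X t \<omega>) (Kg * Kx) (\<tau> + \<rho>)"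
      by (rule holder_yH[OF Kg(2)]) (use Kx tau rho0 Kg in auto)
    obtain L where L: "young_has_integral g (\<lambda>t. X t \<omega>) L"
      "\<forall>\<epsilon>>0. \<exists>\<delta>>0. \<forall>q. part01 q \<and> finel \<delta> q \<longrightarrow> \<bar>rsum g (\<lambda>t. X t \<omega>) q - L\<bar> < \<epsilon>"
      using young_has[OF yHx _ ] Kg Kx tau by (metis mult_nonneg_nonneg)
    have "Y \<omega> = L" unfolding Y_def by (rule young_integral_eq[OF L(1)])
    then show ?case using L(2) by simp
  qed
  have YIF: "AE \<omega> in M. Y \<omega> = I F \<omega>" by (rule Y_identify[OF S X_version Yp F])
  have Ymeas: "Y \<in> borel_measurable M"
    by (rule cm_meas[OF cm I_meas]) (use YIF in \<open>auto elim: AE_mp\<close>)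
  have EY: "(\<integral>\<omega>. (Y \<omega>)^2 \<partial>M) = fact n * (norm F)\<^sup>2"
  proof -
    have "(\<integral>\<omega>. (Y \<omega>)^2 \<partial>M) = (\<integral>\<omega>. (I F \<omega>)^2 \<partial>M)"
      by (rule integral_cong_AE) (use Ymeas I_meas YIF in \<open>auto elim: AE_mp\<close>)
    also have "\<dots> = fact n * (norm F)\<^sup>2"
      using I_isometry[of F F] by (simp add: power2_eq_square power2_norm_eq_inner[symmetric])
    finally show ?thesis .
  qed
  have Xmeas: "X t \<in> borel_measurable M" if "t \<in> {0..1}" for t
    by (rule cm_meas[OF cm I_meas]) (use X_version[OF that] in \<open>auto elim: AE_mp\<close>)
  have EXab: "(\<integral>\<omega>. (X b \<omega> - X a \<omega>)^2 \<partial>M) = fact n * (norm (f b - f a))\<^sup>2"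
    if "a \<in> {0..1}" "b \<in> {0..1}" for a b
  proof -
    have "(\<integral>\<omega>. (X b \<omega> - X a \<omega>)^2 \<partial>M) = (\<integral>\<omega>. (I (f b) \<omega> - I (f a) \<omega>)^2 \<partial>M)"
      by (rule integral_cong_AE)
        (use Xmeas[OF that(1)] Xmeas[OF that(2)] I_meas X_version[OF that(1)] X_version[OF that(2)]
          in \<open>auto elim: AE_mp\<close>)
    also have "\<dots> = fact n * (norm (f b - f a))\<^sup>2" by (rule diff_sq(2)[OF S])
    finally show ?thesis .
  qed
  have EX1: "(\<integral>\<omega>. (X 1 \<omega>)^2 \<partial>M) = fact n * (norm (f 1 - f 0))\<^sup>2"
  proof -
    have "(\<integral>\<omega>. (X 1 \<omega>)^2 \<partial>M) = (\<integral>\<omega>. (X 1 \<omega> - X 0 \<omega>)^2 \<partial>M)"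
    proof (rule integral_cong_AE)
      have "AE \<omega> in M. I (f 0) \<omega> = 0"
      proof -
        have "(\<integral>\<omega>. (I (f 0) \<omega>)\<^sup>2 \<partial>M) = 0" using I_isometry[of "f 0" "f 0"] f0 by (simp add: power2_eq_square)
        then show ?thesis using integral_nonneg_eq_0_iff_AE[OF I_sq[of "f 0"]] by simp
      qed
      then show "AE \<omega> in M. (X 1 \<omega>)\<^sup>2 = (X 1 \<omega> - X 0 \<omega>)\<^sup>2"
        using X_version[of 0] by (auto elim: AE_mp)
    qed (use Xmeas in auto)
    then show ?thesis using EXab[of 0 1] by simp
  qed
  define Ms where "Ms = (SUP r\<in>{0..1}. \<bar>g r\<bar>)"
  define Kn where "Kn = holder_norm \<tau> g"
  have Kn: "0 \<le> Kn" "\<And>s t. s \<in> {0..1} \<Longrightarrow> t \<in> {0..1} \<Longrightarrow> \<bar>g t - g s\<bar> \<le> Kn * \<bar>t - s\<bar> powr \<tau>"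
    using holder_norm_props[OF g_holder tau(1)] unfolding Kn_def by auto
  have Knpos: "0 < Kn" using Kn(1) g_nonzero unfolding Kn_def by simp
  have gc: "continuous_on {0..1} g" by (rule holder_cont[OF tau(1) Kg])
  have "continuous_on {0..1} (\<lambda>r. \<bar>g r\<bar>)" using gc by (intro continuous_intros)
  then obtain r0 where r0: "r0 \<in> {0..1}" "\<And>y. y \<in> {0..1} \<Longrightarrow> \<bar>g y\<bar> \<le> \<bar>g r0\<bar>"
    using continuous_attains_sup[of "{0..1::real}" "\<lambda>r. \<bar>g r\<bar>"] by auto
  have Ms_eq: "Ms = \<bar>g r0\<bar>" unfolding Ms_def
  proof (rule antisym)
    show "(SUP r\<in>{0..1}. \<bar>g r\<bar>) \<le> \<bar>g r0\<bar>" by (rule cSUP_least) (use r0 in auto)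
    have "bdd_above ((\<lambda>r. \<bar>g r\<bar>) ` {0..1})" by (rule bdd_aboveI2[where M="\<bar>g r0\<bar>"]) (use r0 in auto)
    then show "\<bar>g r0\<bar> \<le> (SUP r\<in>{0..1}. \<bar>g r\<bar>)" by (rule cSUP_upper[rotated]) (use r0 in auto)
  qed
  have Mpos: "0 < Ms"
  proof (rule ccontr)
    assume "\<not> 0 < Ms"
    then have "\<forall>r\<in>{0..1}. g r = 0" using r0 Ms_eq by force
    then have "Kn = 0" unfolding Kn_def using holder_norm_props(3)[OF g_holder tau(1)] by simp
    then show False using Knpos by simp
  qed
  define \<sigma> where "\<sigma> = sgn (g r0)"
  have sig: "\<bar>\<sigma>\<bar> = 1" "\<sigma> * g r0 = Ms" using Mpos Ms_eq unfolding \<sigma>_def by (auto simp: abs_sgn sgn_mult_abs)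
  define \<delta>0 where "\<delta>0 = (Ms / (2 * Kn)) powr (1 / \<tau>)"
  have d0pos: "0 < \<delta>0" unfolding \<delta>0_def using Mpos Knpos by simp
  have d0pow: "\<delta>0 powr \<tau> = Ms / (2 * Kn)" unfolding \<delta>0_def powr_powr using tau Mpos Knpos by simp
  have good: "Ms / 2 \<le> \<sigma> * g t" if t: "t \<in> {0..1}" "\<bar>t - r0\<bar> \<le> \<delta>0" for t
  proof -
    have "\<bar>t - r0\<bar> powr \<tau> \<le> \<delta>0 powr \<tau>" by (rule powr_mono2) (use tau t in auto)
    then have "\<bar>t - r0\<bar> powr \<tau> \<le> Ms / (2 * Kn)" using d0pow by simp
    then have "Kn * \<bar>t - r0\<bar> powr \<tau> \<le> Kn * (Ms / (2 * Kn))" using Kn(1) by (rule mult_left_mono)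
    also have "\<dots> = Ms / 2" using Knpos by simp
    finally have "\<bar>g t - g r0\<bar> \<le> Ms / 2" using Kn(2)[OF r0(1) t(1)] by linarith
    moreover have "\<sigma> * g t = \<sigma> * g r0 + \<sigma> * (g t - g r0)" by (simp add: algebra_simps)
    moreover have "\<bar>\<sigma> * (g t - g r0)\<bar> = \<bar>g t - g r0\<bar>" using sig by (simp add: abs_mult)
    ultimately show ?thesis using sig by linarith
  qed
  have final: "\<beta> / 4 * Ms\<^sup>2 * (fact n * (norm (f b - f a))\<^sup>2) \<le> (\<integral>\<omega>. (Y \<omega>)^2 \<partial>M)"
    if ab: "0 \<le> a" "a < b" "b \<le> 1" and gab: "\<forall>t\<in>{a..b}. Ms / 2 \<le> \<sigma> * g t" for a b
  proof -
    have "\<beta> * (Ms / 2)\<^sup>2 * (norm (f b - f a))\<^sup>2 \<le> (norm F)\<^sup>2"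
      by (rule core[OF A1 A3 A4 ab _ sig(1) gab F]) (use Mpos in simp)
    then have "fact n * (\<beta> * (Ms / 2)\<^sup>2 * (norm (f b - f a))\<^sup>2) \<le> fact n * (norm F)\<^sup>2"
      by (rule mult_left_mono) simp
    then show ?thesis unfolding EY by (simp add: power_divide algebra_simps)
  qed
  show ?thesis
  proof (cases "1 \<le> \<delta>0")
    case True
    have "\<forall>t\<in>{0..1}. Ms / 2 \<le> \<sigma> * g t"
    proof
      fix t :: real assume t: "t \<in> {0..1}"
      then have "\<bar>t - r0\<bar> \<le> \<delta>0" using r0(1) True by auto
      then show "Ms / 2 \<le> \<sigma> * g t" using good t by simp
    qed
    then have "\<beta> / 4 * Ms\<^sup>2 * (fact n * (norm (f 1 - f 0))\<^sup>2) \<le> (\<integral>\<omega>. (Y \<omega>)^2 \<partial>M)"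
      by (intro final) auto
    then have "(\<integral>\<omega>. (Y \<omega>)^2 \<partial>M) \<ge> \<beta> / 4 * Ms^2 * (\<integral>\<omega>. (X 1 \<omega>)^2 \<partial>M)" unfolding EX1 .
    then show ?thesis unfolding Y_def Ms_def by blast
  next
    case False
    define a where "a = max 0 (min (r0 - \<delta>0 / 2) (1 - \<delta>0))"
    define b where "b = a + \<delta>0"
    have ab: "0 \<le> a" "a < b" "b \<le> 1" "a \<le> r0" "r0 \<le> b"
      using False d0pos r0(1) unfolding a_def b_def by (auto simp: max_def min_def)
    have gab: "\<forall>t\<in>{a..b}. Ms / 2 \<le> \<sigma> * g t"
    proof
      fix t assume t: "t \<in> {a..b}"
      then have "\<bar>t - r0\<bar> \<le> \<delta>0" "t \<in> {0..1}" using ab unfolding b_def by auto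
      then show "Ms / 2 \<le> \<sigma> * g t" using good by simp
    qed
    have "\<beta> / 4 * Ms\<^sup>2 * (fact n * (norm (f b - f a))\<^sup>2) \<le> (\<integral>\<omega>. (Y \<omega>)^2 \<partial>M)"
      by (rule final[OF ab(1-3) gab])
    then have "(\<integral>\<omega>. (Y \<omega>)^2 \<partial>M) \<ge> \<beta> / 4 * Ms^2 * (\<integral>\<omega>. (X b \<omega> - X a \<omega>)^2 \<partial>M)"
      using EXab[of a b] ab by simp
    moreover have "(Ms / (2 * Kn)) powr (1 / \<tau>) \<le> \<bar>b - a\<bar>" using d0pos unfolding b_def \<delta>0_def by simp
    ultimately have "\<exists>a b. 0 \<le> a \<and> a \<le> b \<and> b \<le> 1 \<and> (Ms / (2 * Kn)) powr (1 / \<tau>) \<le> \<bar>b - a\<bar> \<and>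
        (\<integral>\<omega>. (Y \<omega>)^2 \<partial>M) \<ge> \<beta> / 4 * Ms^2 * (\<integral>\<omega>. (X b \<omega> - X a \<omega>)^2 \<partial>M)"
      using ab by (intro exI[of _ a] exI[of _ b]) auto
    then show ?thesis unfolding Y_def Ms_def Kn_def by blast
  qed
qed


end
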